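(* Let $\alpha\in(0,1)$, $\beta\in(1,2)$ and $\sigma=1-\frac{\alpha}{2}$. The fully discrete scheme described in the context is unconditionally stable; moreover, for sufficiently small temporal stepsize $\tau$ and spatial stepsize $h$, its solution $U^n=(U^n_0,\dots,U^n_M)$ satisfies $$\|U^n\|_h^2\le\|U^0\|_h^2+\frac{(b-a)^\beta\Gamma(1-\alpha)}{c^{(\beta)}_\ast\tilde a^{\alpha}}\max_{0\le k\le n-1}\Big\{\big((k+\sigma)\tau\big)^{\alpha}\|f^{k+\sigma}\|_h^2\Big\},\qquad 1\le n\le N,$$ where $c^{(\beta)}_\ast=\frac{(1-\beta)(2-\beta)(3-\beta)4^{\beta}e^{-9/4}\Psi_\beta}{3}$.
   Context: Time grid: $\tilde a>0$, $T>\tilde a$, $N\in\mathbb{Z}^+$, $\tau=(T-\tilde a)/N$, $t_k=\tilde a+k\tau$, $t_{k+\sigma}=t_k+\sigma\tau$. L2-1$_\sigma$ coefficients: for $1\le i\le k$, $a^{(\alpha,\sigma)}_{i,k}=(\log\frac{t_{k+\sigma}}{t_{i-1}})^{1-\alpha}-(\log\frac{t_{k+\sigma}}{t_{i}})^{1-\alpha}$, $b^{(\alpha,\sigma)}_{i,k}=\frac{1}{\log\frac{t_{i+1}}{t_{i-1}}}\{\frac{2}{2-\alpha}[(\log\frac{t_{k+\sigma}}{t_{i-1}})^{2-\alpha}-(\log\frac{t_{k+\sigma}}{t_{i}})^{2-\alpha}]-\log\frac{t_i}{t_{i-1}}[(\log\frac{t_{k+\sigma}}{t_{i}})^{1-\alpha}+(\log\frac{t_{k+\sigma}}{t_{i-1}})^{1-\alpha}]\}$;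 $c^{(\alpha,\sigma)}_{1,0}=\frac{(\log\frac{t_\sigma}{t_0})^{1-\alpha}}{\Gamma(2-\alpha)\log\frac{t_1}{t_0}}$; for $k\ge1$: $c^{(\alpha,\sigma)}_{1,k}=\frac{a^{(\alpha,\sigma)}_{1,k}-b^{(\alpha,\sigma)}_{1,k}}{\Gamma(2-\alpha)\log\frac{t_1}{t_0}}$, $c^{(\alpha,\sigma)}_{i,k}=\frac{a^{(\alpha,\sigma)}_{i,k}+b^{(\alpha,\sigma)}_{i-1,k}-b^{(\alpha,\sigma)}_{i,k}}{\Gamma(2-\alpha)\log\frac{t_i}{t_{i-1}}}$ ($2\le i\le k$), $c^{(\alpha,\sigma)}_{k+1,k}=\frac{b^{(\alpha,\sigma)}_{k,k}+(\log\frac{t_{k+\sigma}}{t_k})^{1-\alpha}}{\Gamma(2-\alpha)\log\frac{t_{k+1}}{t_k}}$. Space grid: $a<b$, $M\in\mathbb{Z}^+$, $h=(b-a)/M$, $x_j=a+jh$; $(w,v)_h=h\sum_{j=1}^{M-1}w_jv_j$, $\|w\|_h^2=(w,w)_h$. Riesz coefficients: $g^{(\beta)}_k=(-1)^k\binom{\beta}{k}$, $\Psi_\beta=\frac{1}{2\cos(\pi\beta/2)}$, $r^{(\beta)}_0=2\Psi_\beta(\frac{\beta}{2}g^{(\beta)}_1+\frac{2-\beta}{2}g^{(\beta)}_0)$, $r^{(\beta)}_1=\Psi_\beta(\frac{\beta}{2}g^{(\beta)}_0+\frac{2-\beta}{2}g^{(\beta)}_1+\frac{\beta}{2}g^{(\beta)}_2)$,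 $r^{(\beta)}_k=\Psi_\beta(\frac{\beta}{2}g^{(\beta)}_{k+1}+\frac{2-\beta}{2}g^{(\beta)}_k)$ ($k\ge2$), $r^{(\beta)}_{-k}=r^{(\beta)}_k$. Scheme: given $u_0$ and $f$, with $f^{n+\sigma}_j=f(x_j,t_{n+\sigma})$, find $U^n_j$ with $\sum_{i=1}^{n+1}c^{(\alpha,\sigma)}_{i,n}(U^i_j-U^{i-1}_j)+h^{-\beta}\sum_{k=0}^{M}r^{(\beta)}_{j-k}\big(\sigma U^{n+1}_k+(1-\sigma)U^n_k\big)=f^{n+\sigma}_j$ for $0\le n\le N-1$, $1\le j\le M-1$; $U^0_j=u_0(x_j)$; $U^n_0=U^n_M=0$ for $0\le n\le N$. Here $f^{k+\sigma}=(f^{k+\sigma}_j)_j$. *)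

theory Defs
  imports "HOL-Analysis.Analysis"
begin

text \<open>Time grid on [ta, T] with N steps: t_s = ta + s*tau, tau = (T - ta)/N, s real
  (so that t_{k+sigma} = tg ta T N (k + sigma)).\<close>
definition tg :: "real \<Rightarrow> real \<Rightarrow> nat \<Rightarrow> real \<Rightarrow> real" where
  "tg ta T N s = ta + s * ((T - ta) / real N)"

definition a_coef :: "real \<Rightarrow> real \<Rightarrow> real \<Rightarrow> real \<Rightarrow> nat \<Rightarrow> nat \<Rightarrow> nat \<Rightarrow> real" where
  "a_coef \<alpha> \<sigma> ta T N i k =
     (ln (tg ta T N (real k + \<sigma>) / tg ta T N (real i - 1))) powr (1 - \<alpha>)
   - (ln (tg ta T N (real k + \<sigma>) / tg ta T N (real i))) powr (1 - \<alpha>)"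

definition b_coef :: "real \<Rightarrow> real \<Rightarrow> real \<Rightarrow> real \<Rightarrow> nat \<Rightarrow> nat \<Rightarrow> nat \<Rightarrow> real" where
  "b_coef \<alpha> \<sigma> ta T N i k =
     (1 / ln (tg ta T N (real i + 1) / tg ta T N (real i - 1))) *
     (2 / (2 - \<alpha>) *
        ((ln (tg ta T N (real k + \<sigma>) / tg ta T N (real i - 1))) powr (2 - \<alpha>)
       - (ln (tg ta T N (real k + \<sigma>) / tg ta T N (real i))) powr (2 - \<alpha>))
      - ln (tg ta T N (real i) / tg ta T N (real i - 1)) *
        ((ln (tg ta T N (real k + \<sigma>) / tg ta T N (real i))) powr (1 - \<alpha>)
       + (ln (tg ta T N (real k + \<sigma>) / tg ta T N (real i - 1))) powr (1 - \<alpha>)))"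

text \<open>c_{i,k}; only used for 1 <= i <= k+1.\<close>
definition c_coef :: "real \<Rightarrow> real \<Rightarrow> real \<Rightarrow> real \<Rightarrow> nat \<Rightarrow> nat \<Rightarrow> nat \<Rightarrow> real" where
  "c_coef \<alpha> \<sigma> ta T N i k =
    (if k = 0 then
       (ln (tg ta T N \<sigma> / tg ta T N 0)) powr (1 - \<alpha>)
         / (Gamma (2 - \<alpha>) * ln (tg ta T N 1 / tg ta T N 0))
     else if i = k + 1 then
       (b_coef \<alpha> \<sigma> ta T N k k + (ln (tg ta T N (real k + \<sigma>) / tg ta T N (real k))) powr (1 - \<alpha>))
         / (Gamma (2 - \<alpha>) * ln (tg ta T N (real k + 1) / tg ta T N (real k)))
     else if i = 1 then
       (a_coef \<alpha> \<sigma> ta T N 1 k - b_coef \<alpha> \<sigma> ta T N 1 k)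
         / (Gamma (2 - \<alpha>) * ln (tg ta T N 1 / tg ta T N 0))
     else
       (a_coef \<alpha> \<sigma> ta T N i k + b_coef \<alpha> \<sigma> ta T N (i - 1) k - b_coef \<alpha> \<sigma> ta T N i k)
         / (Gamma (2 - \<alpha>) * ln (tg ta T N (real i) / tg ta T N (real i - 1))))"

definition gR :: "real \<Rightarrow> nat \<Rightarrow> real" where
  "gR \<beta> k = (-1) ^ k * (\<beta> gchoose k)"

definition PsiR :: "real \<Rightarrow> real" where
  "PsiR \<beta> = 1 / (2 * cos (pi * \<beta> / 2))"

definition rR :: "real \<Rightarrow> nat \<Rightarrow> real" where
  "rR \<beta> k =
    (if k = 0 then 2 * PsiR \<beta> * (\<beta> / 2 * gR \<beta> 1 + (2 - \<beta>) / 2 * gR \<beta> 0)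
     else if k = 1 then PsiR \<beta> * (\<beta> / 2 * gR \<beta> 0 + (2 - \<beta>) / 2 * gR \<beta> 1 + \<beta> / 2 * gR \<beta> 2)
     else PsiR \<beta> * (\<beta> / 2 * gR \<beta> (k + 1) + (2 - \<beta>) / 2 * gR \<beta> k))"

definition rZ :: "real \<Rightarrow> int \<Rightarrow> real" where
  "rZ \<beta> k = rR \<beta> (nat \<bar>k\<bar>)"

definition cstar :: "real \<Rightarrow> real" where
  "cstar \<beta> = (1 - \<beta>) * (2 - \<beta>) * (3 - \<beta>) * 4 powr \<beta> * exp (- 9 / 4) * PsiR \<beta> / 3"

definition xg :: "real \<Rightarrow> real \<Rightarrow> nat \<Rightarrow> nat \<Rightarrow> real" where
  "xg a b M j = a + real j * ((b - a) / real M)"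

definition normh2 :: "real \<Rightarrow> real \<Rightarrow> nat \<Rightarrow> (nat \<Rightarrow> real) \<Rightarrow> real" where
  "normh2 a b M w = ((b - a) / real M) * (\<Sum>j = 1..M - 1. (w j)\<^sup>2)"

text \<open>U n j is U^n_j; f x t is the source; u0 the initial datum.\<close>
definition scheme ::
  "real \<Rightarrow> real \<Rightarrow> real \<Rightarrow> real \<Rightarrow> real \<Rightarrow> nat \<Rightarrow> real \<Rightarrow> real \<Rightarrow> nat
   \<Rightarrow> (real \<Rightarrow> real) \<Rightarrow> (real \<Rightarrow> real \<Rightarrow> real) \<Rightarrow> (nat \<Rightarrow> nat \<Rightarrow> real) \<Rightarrow> bool" where
  "scheme \<alpha> \<beta> \<sigma> ta T N a b M u0 f U \<longleftrightarrow>
     (\<forall>n < N. \<forall>j \<in> {1..M - 1}.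
        (\<Sum>i = 1..n + 1. c_coef \<alpha> \<sigma> ta T N i n * (U i j - U (i - 1) j))
        + ((b - a) / real M) powr (- \<beta>) *
          (\<Sum>k = 0..M. rZ \<beta> (int j - int k) * (\<sigma> * U (n + 1) k + (1 - \<sigma>) * U n k))
        = f (xg a b M j) (tg ta T N (real n + \<sigma>)))
   \<and> (\<forall>j \<in> {1..M - 1}. U 0 j = u0 (xg a b M j))
   \<and> (\<forall>n \<le> N. U n 0 = 0 \<and> U n M = 0)"

end

theory Submission
  imports Defs
begin

lemma ftc_real:
  fixes F f :: "real \<Rightarrow> real"
  assumes "a \<le> b" "\<And>x. x \<in> {a..b} \<Longrightarrow> (F has_real_derivative f x) (at x)"
  shows "(f has_integral (F b - F a)) {a..b}"
  apply (rule fundamental_theorem_of_calculus[OF assms(1)])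
  using assms(2) has_real_derivative_iff_has_vector_derivative has_vector_derivative_at_within by blast

lemma int_quad:
  fixes x y c0 c1 c2 :: real
  assumes "x \<le> y"
  shows "((\<lambda>s. c0 + c1 * (s - (x+y)/2) + c2 * (s-(x+y)/2)^2) has_integral
          (c0 * (y-x) + c2 * (y-x)^3/12)) {x..y}"
proof -
  let ?F = "\<lambda>s. c0 * s + c1 * (s - (x+y)/2)^2/2 + c2 * (s-(x+y)/2)^3/3"
  have "((\<lambda>s. c0 + c1 * (s - (x+y)/2) + c2 * (s-(x+y)/2)^2) has_integral (?F y - ?F x)) {x..y}"
    by (rule ftc_real[OF assms]) (auto intro!: derivative_eq_intros simp: power2_eq_square power3_eq_cube field_simps)
  moreover have "?F y - ?F x = c0 * (y-x) + c2 * (y-x)^3/12"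
    by (simp add: power2_eq_square power3_eq_cube field_simps)
  ultimately show ?thesis by simp
qed

lemma powr_1m: "0 < z \<Longrightarrow> z powr (1 - a) = z * z powr (-a)" for z a :: real
  using powr_add[of z 1 "-a"] by simp

lemma int_K:
  fixes x y S \<alpha> :: real
  assumes "x \<le> y" "y < S" "\<alpha> < 1"
  shows "((\<lambda>s. (S-s) powr (-\<alpha>)) has_integral
          ((S-x) powr (1-\<alpha>) - (S-y) powr (1-\<alpha>))/(1-\<alpha>)) {x..y}"
proof -
  let ?F = "\<lambda>s. - ((S-s) powr (1-\<alpha>))/(1-\<alpha>)"
  have "((\<lambda>s. (S-s) powr (-\<alpha>)) has_integral (?F y - ?F x)) {x..y}"
  proof (rule ftc_real[OF assms(1)])
    fix s assume "s \<in> {x..y}"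
    hence sp: "S - s > 0" using assms by auto
    have "(?F has_real_derivative - ((1-\<alpha>) * (S-s) powr (1-\<alpha>-1) * (-1))/(1-\<alpha>)) (at s)"
      using sp by (auto intro!: derivative_eq_intros)
    thus "(?F has_real_derivative (S-s) powr (-\<alpha>)) (at s)"
      using assms(3) by simp
  qed
  thus ?thesis by (simp add: field_simps diff_divide_distrib)
qed

lemma int_Kw:
  fixes x y S \<alpha> :: real
  assumes "x \<le> y" "y < S" "\<alpha> < 1"
  defines "G \<equiv> \<lambda>s. (S-s) * (S-s) powr (1-\<alpha>)/(2-\<alpha>) - (S-(x+y)/2) * (S-s) powr (1-\<alpha>)/(1-\<alpha>)"
  shows "((\<lambda>s. (S-s) powr (-\<alpha>) * (s - (x+y)/2)) has_integral (G y - G x)) {x..y}"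
proof (rule ftc_real[OF assms(1)])
  fix s assume "s \<in> {x..y}"
  hence sp: "S - s > 0" using assms by auto
  have d: "(G has_real_derivative
      ((-1) * (S-s) powr (1-\<alpha>) + (S-s) * ((1-\<alpha>) * (S-s) powr (1-\<alpha>-1) * (-1)))/(2-\<alpha>)
       - (S-(x+y)/2) * ((1-\<alpha>) * (S-s) powr (1-\<alpha>-1) * (-1))/(1-\<alpha>)) (at s)"
    unfolding G_def using sp assms(3)
    by (auto intro!: derivative_eq_intros)
  have "((-1) * (S-s) powr (1-\<alpha>) + (S-s) * ((1-\<alpha>) * (S-s) powr (1-\<alpha>-1) * (-1)))/(2-\<alpha>)
       - (S-(x+y)/2) * ((1-\<alpha>) * (S-s) powr (1-\<alpha>-1) * (-1))/(1-\<alpha>) = (S-s) powr (-\<alpha>) * (s - (x+y)/2)"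
  proof -
    have a1: "1 - \<alpha> \<noteq> 0" "2 - \<alpha> \<noteq> 0" using assms(3) by auto
    have e: "(1-\<alpha>-1) = -\<alpha>" by simp
    have g: "\<And>P d. ((-1) * (d * P) + d * ((1-\<alpha>) * P * (-1)))/(2-\<alpha>)
       - (S-(x+y)/2) * ((1-\<alpha>) * P * (-1))/(1-\<alpha>) = P * ((S - (x+y)/2) - d)"
    proof -
      fix P d :: real
      have "((-1) * (d * P) + d * ((1-\<alpha>) * P * (-1)))/(2-\<alpha>) = - d * P"
        using a1 by (simp add: field_simps)
      moreover have "(S-(x+y)/2) * ((1-\<alpha>) * P * (-1))/(1-\<alpha>) = - (S-(x+y)/2) * P"
        using a1 by (simp add: field_simps)
      ultimately show "((-1) * (d * P) + d * ((1-\<alpha>) * P * (-1)))/(2-\<alpha>)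
       - (S-(x+y)/2) * ((1-\<alpha>) * P * (-1))/(1-\<alpha>) = P * ((S - (x+y)/2) - d)"
        by (simp add: algebra_simps)
    qed
    show ?thesis unfolding e powr_1m[OF sp] g by (simp add: algebra_simps)
  qed
  with d show "(G has_real_derivative (S-s) powr (-\<alpha>) * (s - (x+y)/2)) (at s)" by simp
qed
definition Kf :: "real \<Rightarrow> real \<Rightarrow> real \<Rightarrow> real" where
  "Kf \<alpha> S s = (S - s) powr (-\<alpha>)"

lemma Kf_pos: "s < S \<Longrightarrow> 0 < Kf \<alpha> S s"
  by (simp add: Kf_def)

lemma Kf_mono: "0 \<le> \<alpha> \<Longrightarrow> s \<le> s' \<Longrightarrow> s' < S \<Longrightarrow> Kf \<alpha> S s \<le> Kf \<alpha> S s'"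
  unfolding Kf_def by (rule powr_mono2') auto

lemma Kf_convex:
  assumes "0 \<le> \<alpha>"
  shows "convex_on {..<S} (Kf \<alpha> S)"
proof (rule convex_on_realI[where f' = "\<lambda>s. \<alpha> * (S - s) powr (-\<alpha> - 1)"])
  show "connected {..<S}" by simp
next
  fix s assume "s \<in> {..<S}"
  hence sp: "S - s > 0" by simp
  have "((\<lambda>s. (S - s) powr (-\<alpha>)) has_real_derivative (-\<alpha>) * (S-s) powr (-\<alpha> - 1) * (-1)) (at s)"
    using sp by (auto intro!: derivative_eq_intros)
  thus "(Kf \<alpha> S has_real_derivative \<alpha> * (S - s) powr (- \<alpha> - 1)) (at s)"
    unfolding Kf_def[abs_def] by simp
next
  fix x y assume "x \<in> {..<S}" "y \<in> {..<S}" "x \<le> y"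
  thus "\<alpha> * (S - x) powr (- \<alpha> - 1) \<le> \<alpha> * (S - y) powr (- \<alpha> - 1)"
    using assms by (intro mult_left_mono powr_mono2') auto
qed

lemma Kf_chord:
  assumes "0 \<le> \<alpha>" "x < y" "y < S" "x \<le> s" "s \<le> y"
  shows "Kf \<alpha> S s \<le> Kf \<alpha> S x + (Kf \<alpha> S y - Kf \<alpha> S x) / (y - x) * (s - x)"
proof -
  have "convex_on {x..y} (Kf \<alpha> S)"
    by (rule convex_on_subset[OF Kf_convex[OF assms(1)]]) (use assms in auto)
  from convex_onD_Icc'[OF this, of s] assms show ?thesis by simp
qed

lemma convex_slope_mono:
  fixes f :: "real \<Rightarrow> real"
  assumes f: "convex_on I f" and I: "u \<in> I" "z \<in> I" "convex I"
    and ord: "u < v" "v \<le> y" "y < z"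
  shows "(f v - f u) / (v - u) \<le> (f z - f y) / (z - y)"
proof -
  have sub: "{u..z} \<subseteq> I"
    using atMostAtLeast_subset_convex[OF I(3) I(1,2)] ord by simp
  have vI: "v \<in> I" "y \<in> I"
    using sub ord by auto
  have 1: "(f u - f v) / (u - v) \<le> (f v - f z) / (v - z)"
    using convex_on_slope_le[OF f I(1) I(2), of v] ord
    by (smt (verit))
  have 2: "(f v - f z) / (v - z) \<le> (f y - f z) / (y - z)"
  proof (cases "v = y")
    case False
    thus ?thesis using convex_on_slope_le(2)[OF f vI(1) I(2), of y] ord by simp
  qed simp
  have "(f v - f u) / (v - u) = (f u - f v) / (u - v)"
    by (simp add: divide_simps) (simp add: algebra_simps)
  moreover have "(f y - f z) / (y - z) = (f z - f y) / (z - y)"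
    by (simp add: divide_simps) (simp add: algebra_simps)
  ultimately show ?thesis using 1 2 by linarith
qed


definition J0 :: "real \<Rightarrow> real \<Rightarrow> real \<Rightarrow> real \<Rightarrow> real" where
  "J0 \<alpha> S x y = ((S-x) powr (1-\<alpha>) - (S-y) powr (1-\<alpha>))/(1-\<alpha>)"

definition Gw :: "real \<Rightarrow> real \<Rightarrow> real \<Rightarrow> real \<Rightarrow> real" where
  "Gw \<alpha> S m s = (S-s) * (S-s) powr (1-\<alpha>)/(2-\<alpha>) - (S-m) * (S-s) powr (1-\<alpha>)/(1-\<alpha>)"

definition J1 :: "real \<Rightarrow> real \<Rightarrow> real \<Rightarrow> real \<Rightarrow> real" where
  "J1 \<alpha> S x y = Gw \<alpha> S ((x+y)/2) y - Gw \<alpha> S ((x+y)/2) x"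

lemma hasint_J0:
  assumes "x \<le> y" "y < S" "\<alpha> < 1"
  shows "(Kf \<alpha> S has_integral J0 \<alpha> S x y) {x..y}"
  using int_K[OF assms] unfolding Kf_def[abs_def] J0_def by simp

lemma hasint_J1:
  assumes "x \<le> y" "y < S" "\<alpha> < 1"
  shows "((\<lambda>s. Kf \<alpha> S s * (s - (x+y)/2)) has_integral J1 \<alpha> S x y) {x..y}"
  using int_Kw[OF assms] unfolding Kf_def J1_def Gw_def by simp

lemma hasint_W:
  assumes "x \<le> y" "y < S" "\<alpha> < 1"
  shows "((\<lambda>s. Kf \<alpha> S s * (1 - 2/D * (s - (x+y)/2))) has_integral (J0 \<alpha> S x y - 2/D * J1 \<alpha> S x y)) {x..y}"
proof -
  have "((\<lambda>s. Kf \<alpha> S s - 2/D * (Kf \<alpha> S s * (s - (x+y)/2))) has_integral (J0 \<alpha> S x y - 2/D * J1 \<alpha> S x y)) {x..y}"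
    by (intro has_integral_diff hasint_J0[OF assms] has_integral_mult_right hasint_J1[OF assms])
  moreover have "(\<lambda>s. Kf \<alpha> S s * (1 - 2/D * (s - (x+y)/2))) = (\<lambda>s. Kf \<alpha> S s - 2/D * (Kf \<alpha> S s * (s - (x+y)/2)))"
    by (rule ext) (cases "D = 0", simp_all add: field_simps)
  ultimately show ?thesis by simp
qed

lemma sq_comm: "L * (a - b)^2 = L * (b - a) * (b - a)" for L a b :: real
  by (simp add: power2_eq_square algebra_simps)

lemma lin_aux: "k + (- 2/D * k) * t + 0 * t^2 = k * (1 - 2/D * t)" for k D t :: real
  by (simp add: algebra_simps)

lemma M1:
  assumes "x \<le> y" "y < S" "0 \<le> \<alpha>" "\<alpha> < 1"
  shows "0 \<le> J1 \<alpha> S x y"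
proof -
  let ?m = "(x+y)/2"
  have q: "((\<lambda>s. 0 + Kf \<alpha> S ?m * (s - ?m) + 0 * (s - ?m)^2) has_integral (0 * (y-x) + 0 * (y-x)^3/12)) {x..y}"
    by (rule int_quad[OF assms(1)])
  show ?thesis
  proof (rule has_integral_le[OF _ hasint_J1[OF assms(1,2,4)]])
    show "((\<lambda>s. 0 + Kf \<alpha> S ?m * (s - ?m) + 0 * (s - ?m)^2) has_integral 0) {x..y}"
      using q by simp
  next
    fix s assume s: "s \<in> {x..y}"
    have "Kf \<alpha> S ?m * (s - ?m) \<le> Kf \<alpha> S s * (s - ?m)"
    proof (cases "s \<le> ?m")
      case True
      hence "Kf \<alpha> S s \<le> Kf \<alpha> S ?m" using Kf_mono[OF assms(3) True] assms by simp
      thus ?thesis using True by (intro mult_right_mono_neg) auto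
    next
      case False
      hence "Kf \<alpha> S ?m \<le> Kf \<alpha> S s" using Kf_mono[OF assms(3), of ?m s S] assms s by simp
      thus ?thesis using False by (intro mult_right_mono) auto
    qed
    thus "0 + Kf \<alpha> S ?m * (s - ?m) + 0 * (s - ?m)^2 \<le> Kf \<alpha> S s * (s - ?m)" by simp
  qed
qed

lemma M2:
  assumes "x \<le> y" "y < S" "0 \<le> \<alpha>" "\<alpha> < 1" "y - x \<le> D"
  shows "Kf \<alpha> S x * (y - x) \<le> J0 \<alpha> S x y - 2/D * J1 \<alpha> S x y"
proof -
  let ?m = "(x+y)/2"
  have q: "((\<lambda>s. Kf \<alpha> S x + (- 2/D * Kf \<alpha> S x) * (s - ?m) + 0 * (s - ?m)^2) has_integral (Kf \<alpha> S x * (y-x) + 0 * (y-x)^3/12)) {x..y}"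
    by (rule int_quad[OF assms(1)])
  show ?thesis
  proof (rule has_integral_le[OF _ hasint_W[OF assms(1,2,4)]])
    show "((\<lambda>s. Kf \<alpha> S x + (- 2/D * Kf \<alpha> S x) * (s - ?m) + 0 * (s - ?m)^2) has_integral Kf \<alpha> S x * (y - x)) {x..y}"
      using q by simp
  next
    fix s assume s: "s \<in> {x..y}"
    have D: "D > 0 \<or> (x = y)" using assms by auto
    have w: "0 \<le> 1 - 2/D * (s - ?m)"
    proof (cases "x = y")
      case True thus ?thesis using s by simp
    next
      case False
      hence Dp: "D > 0" using assms by auto
      have "2 * (s - ?m) = 2 * s - x - y" by (simp add: field_simps)
      hence "2 * (s - ?m) \<le> D" using s assms by auto
      hence "2/D * (s - ?m) \<le> 1" using Dp by (simp add: divide_simps)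
      thus ?thesis by simp
    qed
    have "Kf \<alpha> S x \<le> Kf \<alpha> S s" using Kf_mono[OF assms(3), of x s S] s assms by simp
    hence "Kf \<alpha> S x * (1 - 2/D * (s - ?m)) \<le> Kf \<alpha> S s * (1 - 2/D * (s - ?m))"
      using w by (rule mult_right_mono)
    moreover have "Kf \<alpha> S x + (- 2/D * Kf \<alpha> S x) * (s - ?m) + 0 * (s - ?m)^2 = Kf \<alpha> S x * (1 - 2/D * (s - ?m))"
      by (rule lin_aux)
    ultimately show "Kf \<alpha> S x + (- 2/D * Kf \<alpha> S x) * (s - ?m) + 0 * (s - ?m)^2 \<le> Kf \<alpha> S s * (1 - 2/D * (s - ?m))"
      by linarith
  qed
qed

lemma M3:
  assumes "x < y" "y < S" "0 \<le> \<alpha>" "\<alpha> < 1" "y - x \<le> D"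
  defines "L \<equiv> (Kf \<alpha> S y - Kf \<alpha> S x) / (y - x)"
  shows "J0 \<alpha> S x y - 2/D * J1 \<alpha> S x y \<le> Kf \<alpha> S x * (y - x) + L * ((y-x)^2/2 - (y-x)^3/(6*D))"
proof -
  let ?m = "(x+y)/2"
  let ?c0 = "Kf \<alpha> S x + L * (y-x)/2"
  let ?c1 = "L - 2/D * (Kf \<alpha> S x + L * (y-x)/2)"
  let ?c2 = "- 2 * L / D"
  have Dp: "D > 0" using assms by auto
  have q: "((\<lambda>s. ?c0 + ?c1 * (s - ?m) + ?c2 * (s - ?m)^2) has_integral (?c0 * (y-x) + ?c2 * (y-x)^3/12)) {x..y}"
    by (rule int_quad) (use assms in auto)
  have e: "?c0 * (y-x) + ?c2 * (y-x)^3/12 = Kf \<alpha> S x * (y - x) + L * ((y-x)^2/2 - (y-x)^3/(6*D))"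
    using Dp by (simp add: field_simps power2_eq_square power3_eq_cube)
  show ?thesis
  proof (rule has_integral_le[OF hasint_W[OF _ assms(2,4)]])
    show "x \<le> y" using assms by simp
    show "((\<lambda>s. ?c0 + ?c1 * (s - ?m) + ?c2 * (s - ?m)^2) has_integral Kf \<alpha> S x * (y - x) + L * ((y-x)^2/2 - (y-x)^3/(6*D))) {x..y}"
      using q e by simp
  next
    fix s assume s: "s \<in> {x..y}"
    have w: "0 \<le> 1 - 2/D * (s - ?m)"
    proof -
      have "2 * (s - ?m) = 2 * s - x - y" by (simp add: field_simps)
      hence "2 * (s - ?m) \<le> D" using s assms by auto
      hence "2/D * (s - ?m) \<le> 1" using Dp by (simp add: divide_simps)
      thus ?thesis by simp
    qed
    have "Kf \<alpha> S s \<le> Kf \<alpha> S x + L * (s - x)"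
      using Kf_chord[OF assms(3,1,2), of s] s unfolding L_def by auto
    hence "Kf \<alpha> S s * (1 - 2/D * (s - ?m)) \<le> (Kf \<alpha> S x + L * (s - x)) * (1 - 2/D * (s - ?m))"
      using w by (rule mult_right_mono)
    also have "\<dots> = ?c0 + ?c1 * (s - ?m) + ?c2 * (s - ?m)^2"
      using Dp by (simp add: field_simps power2_eq_square)
    finally show "Kf \<alpha> S s * (1 - 2/D * (s - ?m)) \<le> ?c0 + ?c1 * (s - ?m) + ?c2 * (s - ?m)^2" .
  qed
qed

lemma M4:
  assumes "x < y" "y < z" "z < S" "0 \<le> \<alpha>" "\<alpha> < 1"
  defines "L \<equiv> (Kf \<alpha> S z - Kf \<alpha> S y) / (z - y)"
  shows "J1 \<alpha> S x y \<le> L * (y-x)^3/12"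
proof -
  let ?m = "(x+y)/2"
  have q: "((\<lambda>s. 0 + Kf \<alpha> S ?m * (s - ?m) + L * (s - ?m)^2) has_integral (0 * (y-x) + L * (y-x)^3/12)) {x..y}"
    by (rule int_quad) (use assms in auto)
  have cv: "convex_on {..<S} (Kf \<alpha> S)" by (rule Kf_convex[OF assms(4)])
  have sl: "(Kf \<alpha> S v - Kf \<alpha> S u) / (v - u) \<le> L" if "x \<le> u" "u < v" "v \<le> y" for u v
    unfolding L_def
    by (rule convex_slope_mono[OF cv, of u z]) (use that assms in auto)
  show ?thesis
  proof (rule has_integral_le[OF hasint_J1[OF _ _ assms(5)] ])
    show "x \<le> y" "y < S" using assms by auto
    show "((\<lambda>s. 0 + Kf \<alpha> S ?m * (s - ?m) + L * (s - ?m)^2) has_integral L * (y-x)^3/12) {x..y}"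
      using q by simp
  next
    fix s assume s: "s \<in> {x..y}"
    have "(Kf \<alpha> S s - Kf \<alpha> S ?m) * (s - ?m) \<le> L * (s - ?m)^2"
    proof (cases s ?m rule: linorder_cases)
      case less
      have "(Kf \<alpha> S ?m - Kf \<alpha> S s) / (?m - s) \<le> L" using sl[of s ?m] less s by auto
      hence "(Kf \<alpha> S ?m - Kf \<alpha> S s) \<le> L * (?m - s)" using less by (simp add: divide_simps)
      hence "(Kf \<alpha> S ?m - Kf \<alpha> S s) * (?m - s) \<le> L * (?m - s) * (?m - s)"
        using less by (intro mult_right_mono) auto
      moreover have "(Kf \<alpha> S s - Kf \<alpha> S ?m) * (s - ?m) = (Kf \<alpha> S ?m - Kf \<alpha> S s) * (?m - s)"
        by (simp add: algebra_simps)
      moreover have "L * (s - ?m)^2 = L * (?m - s) * (?m - s)"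
        using sq_comm[of L s ?m] .
      ultimately show ?thesis by linarith
    next
      case greater
      have "(Kf \<alpha> S s - Kf \<alpha> S ?m) / (s - ?m) \<le> L" using sl[of ?m s] greater s by auto
      hence "(Kf \<alpha> S s - Kf \<alpha> S ?m) \<le> L * (s - ?m)" using greater by (simp add: divide_simps)
      hence "(Kf \<alpha> S s - Kf \<alpha> S ?m) * (s - ?m) \<le> L * (s - ?m) * (s - ?m)"
        using greater by (intro mult_right_mono) auto
      moreover have "L * (s - ?m)^2 = L * (s - ?m) * (s - ?m)"
        by (simp only: power2_eq_square mult.assoc)
      ultimately show ?thesis by linarith
    next
      case equal
      thus ?thesis by (simp only: diff_self mult_zero_right mult_zero_left power2_eq_square)
    qed
    moreover have "Kf \<alpha> S s * (s - ?m) = Kf \<alpha> S ?m * (s - ?m) + (Kf \<alpha> S s - Kf \<alpha> S ?m) * (s - ?m)"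
      by (simp add: algebra_simps)
    ultimately show "Kf \<alpha> S s * (s - ?m) \<le> 0 + Kf \<alpha> S ?m * (s - ?m) + L * (s - ?m)^2"
      by linarith
  qed
qed

lemma tg_pos: "0 < ta \<Longrightarrow> 0 \<le> (T - ta)/real N \<Longrightarrow> 0 \<le> x \<Longrightarrow> 0 < tg ta T N x"
  unfolding tg_def by (intro add_pos_nonneg mult_nonneg_nonneg) assumption+

lemma tg_mono: "0 \<le> (T - ta)/real N \<Longrightarrow> x \<le> y \<Longrightarrow> tg ta T N x \<le> tg ta T N y"
  unfolding tg_def by (rule add_left_mono, rule mult_right_mono)

lemma tg_strict: "0 < (T - ta)/real N \<Longrightarrow> x < y \<Longrightarrow> tg ta T N x < tg ta T N y"
  unfolding tg_def by (rule add_strict_left_mono, rule mult_strict_right_mono)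

definition sg :: "real \<Rightarrow> real \<Rightarrow> nat \<Rightarrow> real \<Rightarrow> real" where
  "sg ta T N x = ln (tg ta T N x)"

lemma sg_strict: "0 < ta \<Longrightarrow> 0 < (T - ta)/real N \<Longrightarrow> 0 \<le> x \<Longrightarrow> x < y \<Longrightarrow> sg ta T N x < sg ta T N y"
  unfolding sg_def using tg_pos[of ta T N x] tg_strict[of T ta N x y] by simp

lemma ln_div_tg: "0 < ta \<Longrightarrow> 0 \<le> (T - ta)/real N \<Longrightarrow> 0 \<le> x \<Longrightarrow> 0 \<le> y \<Longrightarrow>
   ln (tg ta T N x / tg ta T N y) = sg ta T N x - sg ta T N y"
  unfolding sg_def using tg_pos[of ta T N x] tg_pos[of ta T N y] by (simp add: ln_div)

lemma b_alg_poly: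
  fixes A B PA PB u q v E :: real
  assumes "q * (1 + u) = 1" "v * u = 1"
  shows "E * (2 * q * (A * PA - B * PB) - (A - B) * (PB + PA))
       = u * (2 * E) * ((B * PB * q - ((A + B)/2) * PB * v) - (A * PA * q - ((A + B)/2) * PA * v))"
proof -
  have "E * (2 * q * (A * PA - B * PB) - (A - B) * (PB + PA))
       - u * (2 * E) * ((B * PB * q - ((A + B)/2) * PB * v) - (A * PA * q - ((A + B)/2) * PA * v))
      = - 2 * E * (B * PB - A * PA) * (q * (1 + u) - 1) + E * (A + B) * (PB - PA) * (v * u - 1)"
    by (simp add: field_simps)
  thus ?thesis using assms by simp
qed

lemma b_alg0:
  fixes A B PA PB u D :: real
  assumes "0 < u"
  shows "1 / D * (2 / (1 + u) * (A * PA - B * PB) - (A - B) * (PB + PA))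
       = u * (2 / D) * ((B * PB / (1 + u) - ((A + B)/2) * PB / u)
                              - (A * PA / (1 + u) - ((A + B)/2) * PA / u))"
proof -
  have "inverse (1+u) * (1 + u) = 1" "inverse u * u = 1" using assms by auto
  from b_alg_poly[OF this, where E="inverse D" and A=A and B=B and PA=PA and PB=PB]
  show ?thesis by (simp only: divide_inverse mult_1_left)
qed

lemma b_alg:
  fixes A B PA PB \<alpha> D :: real
  assumes "\<alpha> < 1"
  shows "1 / D * (2 / (2 - \<alpha>) * (A * PA - B * PB) - (A - B) * (PB + PA))
       = (1 - \<alpha>) * (2 / D) * ((B * PB / (2 - \<alpha>) - ((A + B)/2) * PB / (1 - \<alpha>))
                              - (A * PA / (2 - \<alpha>) - ((A + B)/2) * PA / (1 - \<alpha>)))"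
proof -
  have e: "1 + (1 - \<alpha>) = 2 - \<alpha>" by simp
  have "0 < 1 - \<alpha>" using assms by simp
  from b_alg0[OF this, where A=A and B=B and PA=PA and PB=PB and D=D] show ?thesis unfolding e .
qed


lemma powr_2m: "0 < z \<Longrightarrow> z powr (2 - a) = z * z powr (1 - a)" for z a :: real
  using powr_add[of z 1 "1-a"] by simp

lemma real_i_minus1: "1 \<le> i \<Longrightarrow> real i - 1 = real (i - 1)"
  by (simp add: of_nat_diff)

lemma a_coef_eq:
  assumes "0 < ta" "0 < (T - ta)/real N" "0 < \<sigma>" "\<alpha> < 1" "1 \<le> i" "i \<le> k"
  shows "a_coef \<alpha> \<sigma> ta T N i k =
     (1 - \<alpha>) * J0 \<alpha> (sg ta T N (real k + \<sigma>)) (sg ta T N (real (i-1))) (sg ta T N (real i))"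
proof -
  have e: "real i - 1 = real (i - 1)" using assms by (simp add: of_nat_diff)
  have l1: "ln (tg ta T N (real k + \<sigma>) / tg ta T N (real (i - 1))) = sg ta T N (real k + \<sigma>) - sg ta T N (real (i-1))"
    by (rule ln_div_tg) (use assms in auto)
  have l2: "ln (tg ta T N (real k + \<sigma>) / tg ta T N (real i)) = sg ta T N (real k + \<sigma>) - sg ta T N (real i)"
    by (rule ln_div_tg) (use assms in auto)
  show ?thesis unfolding a_coef_def J0_def e l1 l2 using assms by simp
qed

lemma b_coef_eq:
  assumes "0 < ta" "0 < (T - ta)/real N" "0 < \<sigma>" "\<alpha> < 1" "1 \<le> i" "i \<le> k"
  shows "b_coef \<alpha> \<sigma> ta T N i k =
     (1 - \<alpha>) * (2 / (sg ta T N (real (i+1)) - sg ta T N (real (i-1)))) *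
       J1 \<alpha> (sg ta T N (real k + \<sigma>)) (sg ta T N (real (i-1))) (sg ta T N (real i))"
proof -
  let ?S = "sg ta T N (real k + \<sigma>)" and ?x = "sg ta T N (real (i-1))" and ?y = "sg ta T N (real i)"
  have e: "real i - 1 = real (i - 1)" using assms by (simp add: of_nat_diff)
  have e2: "real i + 1 = real (i + 1)" by simp
  have l1: "ln (tg ta T N (real k + \<sigma>) / tg ta T N (real (i - 1))) = ?S - ?x"
    by (rule ln_div_tg) (use assms in auto)
  have l2: "ln (tg ta T N (real k + \<sigma>) / tg ta T N (real i)) = ?S - ?y"
    by (rule ln_div_tg) (use assms in auto)
  have l3: "ln (tg ta T N (real i) / tg ta T N (real (i-1))) = ?y - ?x"
    by (rule ln_div_tg) (use assms in auto)
  have l4: "ln (tg ta T N (real (i+1)) / tg ta T N (real (i-1))) = sg ta T N (real (i+1)) - ?x"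
    by (rule ln_div_tg) (use assms in auto)
  have yS: "?y < ?S" by (rule sg_strict) (use assms in auto)
  have xy: "?x < ?y" by (rule sg_strict) (use assms in auto)
  have Ap: "0 < ?S - ?x" and Bp: "0 < ?S - ?y" using xy yS by auto
  have d: "?y - ?x = (?S - ?x) - (?S - ?y)" by simp
  have m: "?S - (?x + ?y)/2 = ((?S - ?x) + (?S - ?y))/2" by (simp add: field_simps)
  show ?thesis
    unfolding b_coef_def J1_def Gw_def e e2 l1 l2 l3 l4 powr_2m[OF Ap] powr_2m[OF Bp] d m
    by (rule b_alg[OF assms(4)])
qed


lemma ln_lower: "0 \<le> x \<Longrightarrow> x / (1 + x) \<le> ln (1 + x)" for x :: real
proof -
  assume x: "0 \<le> x"
  have "ln (1 / (1 + x)) \<le> 1 / (1 + x) - 1" by (rule ln_le_minus_one) (use x in auto)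
  moreover have "ln (1 / (1 + x)) = - ln (1 + x)" using x by (simp add: ln_div)
  moreover have "1 / (1 + x) - 1 = - (x / (1 + x))" using x by (simp add: field_simps)
  ultimately show ?thesis by simp
qed

lemma ln_sigma: "0 \<le> \<sigma> \<Longrightarrow> \<sigma> \<le> 1 \<Longrightarrow> 0 \<le> x \<Longrightarrow> \<sigma> * ln (1 + x) \<le> ln (1 + \<sigma> * x)" for x \<sigma> :: real
proof -
  assume a: "0 \<le> \<sigma>" "\<sigma> \<le> 1" "0 \<le> x"
  have "(1 + x) powr \<sigma> * 1 powr (1 - \<sigma>) \<le> \<sigma> * (1 + x) + (1 - \<sigma>) * 1"
    by (rule Youngs_inequality_0) (use a in auto)
  hence le: "(1 + x) powr \<sigma> \<le> 1 + \<sigma> * x" by (simp add: algebra_simps)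
  have p: "0 < 1 + \<sigma> * x" using a by (simp add: add_pos_nonneg)
  have "ln ((1 + x) powr \<sigma>) \<le> ln (1 + \<sigma> * x)" using le p a by (subst ln_le_cancel_iff) auto
  thus ?thesis using a by (simp add: ln_powr)
qed

lemma tg_tau: "tg ta T N x = ta + x * ((T - ta)/real N)"
  by (simp add: tg_def)

lemma tg_succ: "tg ta T N (real (Suc i)) = tg ta T N (real i) + (T - ta)/real N"
proof -
  define \<tau> where "\<tau> = (T - ta)/real N"
  have "ta + real (Suc i) * \<tau> = (ta + real i * \<tau>) + \<tau>" by (simp add: algebra_simps)
  thus ?thesis unfolding tg_tau \<tau>_def[symmetric] .
qed

lemma Delta_eq:
  assumes "0 < ta" "0 < (T - ta)/real N"
  shows "sg ta T N (real (Suc i)) - sg ta T N (real i) = ln (1 + ((T - ta)/real N) / tg ta T N (real i))"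
proof -
  define \<tau> where "\<tau> = (T - ta)/real N"
  have p: "0 < tg ta T N (real i)" by (rule tg_pos) (use assms in auto)
  have "sg ta T N (real (Suc i)) - sg ta T N (real i) = ln (tg ta T N (real (Suc i)) / tg ta T N (real i))"
    by (rule ln_div_tg[symmetric]) (use assms in auto)
  also have "tg ta T N (real (Suc i)) / tg ta T N (real i) = 1 + \<tau> / tg ta T N (real i)"
    unfolding tg_succ \<tau>_def[symmetric] using p by (simp add: field_simps)
  finally show ?thesis unfolding \<tau>_def .
qed

lemma Delta_pos:
  assumes "0 < ta" "0 < (T - ta)/real N"
  shows "0 < sg ta T N (real (Suc i)) - sg ta T N (real i)"
  using sg_strict[OF assms, of "real i" "real (Suc i)"] by simp

lemma Delta_decr:
  assumes "0 < ta" "0 < (T - ta)/real N"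
  shows "sg ta T N (real (Suc (Suc i))) - sg ta T N (real (Suc i)) \<le> sg ta T N (real (Suc i)) - sg ta T N (real i)"
proof -
  define \<tau> where "\<tau> = (T - ta)/real N"
  have tp: "0 < \<tau>" using assms unfolding \<tau>_def by simp
  have p: "0 < tg ta T N (real i)" by (rule tg_pos) (use assms in auto)
  have le: "tg ta T N (real i) \<le> tg ta T N (real (Suc i))" by (rule tg_mono) (use assms in auto)
  have "\<tau> / tg ta T N (real (Suc i)) \<le> \<tau> / tg ta T N (real i)"
    using p le tp by (intro divide_left_mono) auto
  moreover have "0 < 1 + \<tau> / tg ta T N (real (Suc i))" using p le tp by (intro add_pos_nonneg) auto
  ultimately have "ln (1 + \<tau> / tg ta T N (real (Suc i))) \<le> ln (1 + \<tau> / tg ta T N (real i))"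
    by (subst ln_le_cancel_iff) auto
  thus ?thesis unfolding Delta_eq[OF assms] \<tau>_def .
qed

lemma Delta_ratio:
  assumes "0 < ta" "0 < (T - ta)/real N" "(T - ta)/real N \<le> ta / 8"
  shows "sg ta T N (real (Suc i)) - sg ta T N (real i) \<le> 5/4 * (sg ta T N (real (Suc (Suc i))) - sg ta T N (real (Suc i)))"
proof -
  define \<tau> where "\<tau> = (T - ta)/real N"
  have tp: "0 < \<tau>" "\<tau> \<le> ta/8" using assms unfolding \<tau>_def by auto
  let ?a = "tg ta T N (real i)"
  have a0: "ta \<le> ?a" unfolding tg_tau \<tau>_def[symmetric] using tp by simp
  have p: "0 < ?a" using a0 assms(1) by linarith
  have s: "tg ta T N (real (Suc i)) = ?a + \<tau>" unfolding \<tau>_def by (rule tg_succ)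
  have "ln (1 + \<tau> / ?a) \<le> \<tau> / ?a" by (rule ln_add_one_self_le_self) (use p tp in auto)
  also have "\<tau> / ?a \<le> 5/4 * (\<tau> / (?a + 2 * \<tau>))"
  proof -
    have "8 * \<tau> \<le> ta" using tp by simp
    hence "4 * (?a + 2 * \<tau>) \<le> 5 * ?a" using a0 by (simp add: algebra_simps)
    thus ?thesis using p tp by (simp add: field_simps)
  qed
  also have "\<tau> / (?a + 2 * \<tau>) = (\<tau> / (?a + \<tau>)) / (1 + \<tau> / (?a + \<tau>))"
  proof -
    have q1: "?a + \<tau> \<noteq> 0" "?a + 2 * \<tau> \<noteq> 0" using p tp by auto
    have "1 + \<tau> / (?a + \<tau>) = (?a + 2 * \<tau>) / (?a + \<tau>)" using q1 by (simp add: field_simps)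
    thus ?thesis using q1 by simp
  qed
  also have "\<dots> \<le> ln (1 + \<tau> / (?a + \<tau>))" by (rule ln_lower) (use p tp in auto)
  finally show ?thesis unfolding Delta_eq[OF assms(1,2)] s \<tau>_def by simp
qed

lemma X_lower:
  assumes "0 < ta" "0 < (T - ta)/real N" "0 \<le> \<sigma>" "\<sigma> \<le> 1"
  shows "\<sigma> * (sg ta T N (real (Suc k)) - sg ta T N (real k)) \<le> sg ta T N (real k + \<sigma>) - sg ta T N (real k)"
proof -
  define \<tau> where "\<tau> = (T - ta)/real N"
  have tp: "0 < \<tau>" using assms unfolding \<tau>_def by auto
  let ?a = "tg ta T N (real k)"
  have p: "0 < ?a" by (rule tg_pos) (use assms in auto)
  have "sg ta T N (real k + \<sigma>) - sg ta T N (real k) = ln (tg ta T N (real k + \<sigma>) / ?a)"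
    by (rule ln_div_tg[symmetric]) (use assms in auto)
  also have "tg ta T N (real k + \<sigma>) / ?a = 1 + \<sigma> * (\<tau> / ?a)"
    using p unfolding tg_tau \<tau>_def[symmetric] by (simp add: field_simps)
  finally have e: "sg ta T N (real k + \<sigma>) - sg ta T N (real k) = ln (1 + \<sigma> * (\<tau> / ?a))" .
  show ?thesis unfolding e Delta_eq[OF assms(1,2)] \<tau>_def[symmetric]
    by (rule ln_sigma) (use assms p tp in auto)
qed

lemma S0_upper:
  assumes "0 < ta" "0 < (T - ta)/real N" "0 \<le> x"
  shows "sg ta T N x - sg ta T N 0 \<le> x * ((T - ta)/real N) / ta"
proof -
  define \<tau> where "\<tau> = (T - ta)/real N"
  have tp: "0 < \<tau>" using assms unfolding \<tau>_def by auto
  have "sg ta T N x - sg ta T N 0 = ln (tg ta T N x / tg ta T N 0)"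
    by (rule ln_div_tg[symmetric]) (use assms in auto)
  also have "tg ta T N x / tg ta T N 0 = 1 + x * \<tau> / ta"
    using assms unfolding tg_tau \<tau>_def[symmetric] by (simp add: field_simps)
  also have "ln (1 + x * \<tau> / ta) \<le> x * \<tau> / ta"
    by (rule ln_add_one_self_le_self) (use assms tp in auto)
  finally show ?thesis unfolding \<tau>_def .
qed

lemma c_coef_form:
  assumes "0 < ta" "0 < (T - ta)/real N" "0 < \<sigma>" "\<alpha> < 1" "1 \<le> i" "i \<le> k"
  defines "S \<equiv> sg ta T N (real k + \<sigma>)"
  defines "s \<equiv> \<lambda>j. sg ta T N (real j)"
  shows "c_coef \<alpha> \<sigma> ta T N i k =
    (1 - \<alpha>) * (J0 \<alpha> S (s (i-1)) (s i) - 2 / (s (i+1) - s (i-1)) * J1 \<alpha> S (s (i-1)) (s i)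
       + (if i = 1 then 0 else 2 / (s i - s (i-2)) * J1 \<alpha> S (s (i-2)) (s (i-1))))
     / (Gamma (2 - \<alpha>) * (s i - s (i-1)))"
proof -
  have k0: "k \<noteq> 0" "i \<noteq> k + 1" using assms by auto
  have lnD: "ln (tg ta T N (real i) / tg ta T N (real i - 1)) = s i - s (i-1)"
    using ln_div_tg[of ta T N "real i" "real (i-1)"] assms by (simp add: s_def of_nat_diff)
  have ai: "a_coef \<alpha> \<sigma> ta T N i k = (1 - \<alpha>) * J0 \<alpha> S (s (i-1)) (s i)"
    unfolding S_def s_def by (rule a_coef_eq) (use assms in auto)
  have bi: "b_coef \<alpha> \<sigma> ta T N i k = (1 - \<alpha>) * (2 / (s (i+1) - s (i-1))) * J1 \<alpha> S (s (i-1)) (s i)"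
    unfolding S_def s_def by (rule b_coef_eq) (use assms in auto)
  show ?thesis
  proof (cases "i = 1")
    case True
    have l1: "ln (tg ta T N 1 / tg ta T N 0) = s 1 - s 0"
      using ln_div_tg[of ta T N 1 0] assms by (simp add: s_def)
    have "c_coef \<alpha> \<sigma> ta T N i k = (a_coef \<alpha> \<sigma> ta T N 1 k - b_coef \<alpha> \<sigma> ta T N 1 k)
         / (Gamma (2 - \<alpha>) * ln (tg ta T N 1 / tg ta T N 0))"
      unfolding c_coef_def using k0 True by simp
    also have "\<dots> = (1 - \<alpha>) * (J0 \<alpha> S (s 0) (s 1) - 2 / (s 2 - s 0) * J1 \<alpha> S (s 0) (s 1))
         / (Gamma (2 - \<alpha>) * (s 1 - s 0))"
    proof -
      have ai1: "a_coef \<alpha> \<sigma> ta T N 1 k = (1 - \<alpha>) * J0 \<alpha> S (s 0) (s 1)" using ai True by simp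
      have e2: "i + 1 = 2" using True by simp
      have bi1: "b_coef \<alpha> \<sigma> ta T N 1 k = (1 - \<alpha>) * (2 / (s 2 - s 0)) * J1 \<alpha> S (s 0) (s 1)"
        using bi True unfolding e2 by simp
      show ?thesis unfolding ai1 bi1 l1 by (simp add: algebra_simps)
    qed
    finally show ?thesis using True by (simp add: numeral_2_eq_2)
  next
    case False
    hence i2: "2 \<le> i" using assms by auto
    have bi1: "b_coef \<alpha> \<sigma> ta T N (i-1) k = (1 - \<alpha>) * (2 / (s (i-1+1) - s (i-1-1))) * J1 \<alpha> S (s (i-1-1)) (s (i-1))"
      unfolding S_def s_def by (rule b_coef_eq) (use assms i2 in auto)
    have e1: "i - 1 + 1 = i" "i - 1 - 1 = i - 2" using i2 by auto
    have "c_coef \<alpha> \<sigma> ta T N i k = (a_coef \<alpha> \<sigma> ta T N i k + b_coef \<alpha> \<sigma> ta T N (i - 1) k - b_coef \<alpha> \<sigma> ta T N i k)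
         / (Gamma (2 - \<alpha>) * ln (tg ta T N (real i) / tg ta T N (real i - 1)))"
      unfolding c_coef_def using k0 False by simp
    also have "\<dots> = (1 - \<alpha>) * (J0 \<alpha> S (s (i-1)) (s i) - 2 / (s (i+1) - s (i-1)) * J1 \<alpha> S (s (i-1)) (s i)
       + 2 / (s i - s (i-2)) * J1 \<alpha> S (s (i-2)) (s (i-1))) / (Gamma (2 - \<alpha>) * (s i - s (i-1)))"
      unfolding lnD ai bi bi1 e1 by (simp add: algebra_simps)
    finally show ?thesis using False by simp
  qed
qed


lemma sg_lt_S:
  assumes "0 < ta" "0 < (T - ta)/real N" "0 < \<sigma>" "i \<le> k"
  shows "sg ta T N (real i) < sg ta T N (real k + \<sigma>)"
  by (rule sg_strict) (use assms in auto)

lemma sg_mono_nat: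
  assumes "0 < ta" "0 < (T - ta)/real N" "i < j"
  shows "sg ta T N (real i) < sg ta T N (real j)"
  by (rule sg_strict) (use assms in auto)

lemma Gamma2_pos: "(\<alpha>::real) < 1 \<Longrightarrow> 0 < Gamma (2 - \<alpha>)"
  by (rule Gamma_real_pos) simp

lemma c_lower:
  assumes "0 < ta" "0 < (T - ta)/real N" "0 < \<sigma>" "0 \<le> \<alpha>" "\<alpha> < 1" "1 \<le> i" "i \<le> k"
  shows "(1 - \<alpha>) * Kf \<alpha> (sg ta T N (real k + \<sigma>)) (sg ta T N (real (i-1))) / Gamma (2 - \<alpha>)
         \<le> c_coef \<alpha> \<sigma> ta T N i k"
proof -
  define S where "S = sg ta T N (real k + \<sigma>)"
  define s where "s = (\<lambda>j. sg ta T N (real j))"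
  have sS: "\<And>j. j \<le> k \<Longrightarrow> s j < S" unfolding s_def S_def using sg_lt_S assms by blast
  have sm: "\<And>j j'. j < j' \<Longrightarrow> s j < s j'" unfolding s_def using sg_mono_nat assms by blast
  have g: "0 < Gamma (2 - \<alpha>)" using Gamma2_pos assms by blast
  let ?x = "s (i-1)" and ?y = "s i" and ?D = "s (i+1) - s (i-1)"
  have xy: "?x < ?y" using sm assms by simp
  have yS: "?y < S" using sS assms by simp
  have Dge: "?y - ?x \<le> ?D" using sm[of i "i+1"] by simp
  have W: "Kf \<alpha> S ?x * (?y - ?x) \<le> J0 \<alpha> S ?x ?y - 2 / ?D * J1 \<alpha> S ?x ?y"
    by (rule M2) (use xy yS assms Dge in auto)
  have E: "0 \<le> (if i = 1 then 0 else 2 / (s i - s (i-2)) * J1 \<alpha> S (s (i-2)) (s (i-1)))"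
  proof (cases "i = 1")
    case False
    have i2: "i - 2 < i - 1" "i - 1 \<le> k" using False assms by auto
    have "0 \<le> J1 \<alpha> S (s (i-2)) (s (i-1))"
      by (rule M1) (use sm[OF i2(1)] sS[OF i2(2)] assms in auto)
    moreover have "0 < s i - s (i-2)" using sm[of "i-2" i] assms by simp
    ultimately show ?thesis by simp
  qed simp
  have form: "c_coef \<alpha> \<sigma> ta T N i k =
    (1 - \<alpha>) * (J0 \<alpha> S ?x ?y - 2 / ?D * J1 \<alpha> S ?x ?y
       + (if i = 1 then 0 else 2 / (s i - s (i-2)) * J1 \<alpha> S (s (i-2)) (s (i-1))))
     / (Gamma (2 - \<alpha>) * (?y - ?x))"
    unfolding S_def s_def by (rule c_coef_form) (use assms in auto)
  have "(1 - \<alpha>) * Kf \<alpha> S ?x / Gamma (2 - \<alpha>) = (1 - \<alpha>) * (Kf \<alpha> S ?x * (?y - ?x)) / (Gamma (2 - \<alpha>) * (?y - ?x))"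
    using xy g by simp
  also have "\<dots> \<le> c_coef \<alpha> \<sigma> ta T N i k"
    unfolding form using W E g xy assms
    by (intro divide_right_mono mult_left_mono) auto
  finally show ?thesis unfolding S_def s_def .
qed

lemma c_upper:
  assumes "0 < ta" "0 < (T - ta)/real N" "(T - ta)/real N \<le> ta / 8" "0 < \<sigma>" "0 \<le> \<alpha>" "\<alpha> < 1" "1 \<le> i" "i \<le> k"
  shows "c_coef \<alpha> \<sigma> ta T N i k \<le> (1 - \<alpha>) * Kf \<alpha> (sg ta T N (real k + \<sigma>)) (sg ta T N (real i)) / Gamma (2 - \<alpha>)"
proof -
  define S where "S = sg ta T N (real k + \<sigma>)"
  define s where "s = (\<lambda>j. sg ta T N (real j))"
  have sS: "\<And>j. j \<le> k \<Longrightarrow> s j < S" unfolding s_def S_def using sg_lt_S assms by blast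
  have sm: "\<And>j j'. j < j' \<Longrightarrow> s j < s j'" unfolding s_def using sg_mono_nat assms by blast
  have g: "0 < Gamma (2 - \<alpha>)" using Gamma2_pos assms by blast
  let ?x = "s (i-1)" and ?y = "s i" and ?D = "s (i+1) - s (i-1)"
  define L where "L = (Kf \<alpha> S ?y - Kf \<alpha> S ?x) / (?y - ?x)"
  define \<Delta> where "\<Delta> = ?y - ?x"
  have xy: "?x < ?y" using sm assms by simp
  have dp: "0 < \<Delta>" using xy unfolding \<Delta>_def by simp
  have yS: "?y < S" using sS assms by simp
  have Dge: "?y - ?x \<le> ?D" using sm[of i "i+1"] by simp
  have Dp: "0 < ?D" using sm[of "i-1" "i+1"] by simp
  have L0: "0 \<le> L" unfolding L_def using Kf_mono[OF assms(5), of ?x ?y S] xy yS by simp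
  have Kid: "Kf \<alpha> S ?x * \<Delta> + L * \<Delta>^2 = Kf \<alpha> S ?y * \<Delta>"
    unfolding L_def \<Delta>_def using xy by (simp add: power2_eq_square field_simps)
  have W: "J0 \<alpha> S ?x ?y - 2 / ?D * J1 \<alpha> S ?x ?y \<le> Kf \<alpha> S ?x * \<Delta> + L * (\<Delta>^2/2 - \<Delta>^3/(6 * ?D))"
    unfolding L_def \<Delta>_def by (rule M3) (use xy yS assms Dge in auto)
  have W2: "L * (\<Delta>^2/2 - \<Delta>^3/(6 * ?D)) \<le> L * (\<Delta>^2/2)"
    using L0 dp Dp by (intro mult_left_mono) auto
  have E: "(if i = 1 then 0 else 2 / (s i - s (i-2)) * J1 \<alpha> S (s (i-2)) (s (i-1))) \<le> L * (\<Delta>^2/2)"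
  proof (cases "i = 1")
    case True thus ?thesis using L0 by simp
  next
    case False
    define \<Delta>' where "\<Delta>' = s (i-1) - s (i-2)"
    have dp': "0 < \<Delta>'" unfolding \<Delta>'_def using sm[of "i-2" "i-1"] False assms by simp
    have D'e: "s i - s (i-2) = \<Delta> + \<Delta>'" unfolding \<Delta>_def \<Delta>'_def by simp
    have M: "J1 \<alpha> S (s (i-2)) (s (i-1)) \<le> L * \<Delta>'^3/12"
      unfolding L_def \<Delta>'_def by (rule M4) (use sm[of "i-2" "i-1"] xy yS False assms in auto)
    have rat: "\<Delta>' \<le> 5/4 * \<Delta>"
    proof -
      define m where "m = i - 2"
      have im: "i = Suc (Suc m)" using False assms unfolding m_def by auto
      have "sg ta T N (real (Suc m)) - sg ta T N (real m) \<le> 5/4 * (sg ta T N (real (Suc (Suc m))) - sg ta T N (real (Suc m)))"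
        by (rule Delta_ratio[OF assms(1,2,3)])
      thus ?thesis unfolding \<Delta>'_def \<Delta>_def s_def im by simp
    qed
    have "2 / (\<Delta> + \<Delta>') * J1 \<alpha> S (s (i-2)) (s (i-1)) \<le> 2 / (\<Delta> + \<Delta>') * (L * \<Delta>'^3/12)"
      using M dp dp' by (intro mult_left_mono) auto
    also have "\<dots> = L * (\<Delta>'^2/6) * (\<Delta>' / (\<Delta> + \<Delta>'))"
      using dp dp' by (simp add: field_simps power2_eq_square power3_eq_cube)
    also have "\<dots> \<le> L * (\<Delta>'^2/6) * 1"
      using dp dp' L0 by (intro mult_left_mono) auto
    also have "\<dots> \<le> L * (\<Delta>^2/2)"
    proof -
      have "\<Delta>'^2 \<le> (5/4 * \<Delta>)^2" using rat dp' by (intro power_mono) auto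
      moreover have "(5/4 * \<Delta>)^2 = 25/16 * \<Delta>^2" by (simp add: power2_eq_square)
      moreover have "0 \<le> \<Delta>^2" by simp
      ultimately have "\<Delta>'^2/6 \<le> \<Delta>^2/2" by linarith
      hence "L * (\<Delta>'^2/6) \<le> L * (\<Delta>^2/2)" using L0 by (rule mult_left_mono)
      thus ?thesis by simp
    qed
    finally show ?thesis using False D'e by simp
  qed
  have form: "c_coef \<alpha> \<sigma> ta T N i k =
    (1 - \<alpha>) * (J0 \<alpha> S ?x ?y - 2 / ?D * J1 \<alpha> S ?x ?y
       + (if i = 1 then 0 else 2 / (s i - s (i-2)) * J1 \<alpha> S (s (i-2)) (s (i-1))))
     / (Gamma (2 - \<alpha>) * \<Delta>)"
    unfolding S_def s_def \<Delta>_def by (rule c_coef_form) (use assms(1,2,4,6,7,8) in auto)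
  have num: "J0 \<alpha> S ?x ?y - 2 / ?D * J1 \<alpha> S ?x ?y
       + (if i = 1 then 0 else 2 / (s i - s (i-2)) * J1 \<alpha> S (s (i-2)) (s (i-1))) \<le> Kf \<alpha> S ?y * \<Delta>"
  proof -
    have "J0 \<alpha> S ?x ?y - 2 / ?D * J1 \<alpha> S ?x ?y
       + (if i = 1 then 0 else 2 / (s i - s (i-2)) * J1 \<alpha> S (s (i-2)) (s (i-1)))
       \<le> Kf \<alpha> S ?x * \<Delta> + L * (\<Delta>^2/2) + L * (\<Delta>^2/2)" using W W2 E by linarith
    also have "\<dots> = Kf \<alpha> S ?x * \<Delta> + L * \<Delta>^2" by (simp add: field_simps)
    finally show ?thesis using Kid by simp
  qed
  have "c_coef \<alpha> \<sigma> ta T N i k \<le> (1 - \<alpha>) * (Kf \<alpha> S ?y * \<Delta>) / (Gamma (2 - \<alpha>) * \<Delta>)"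
    unfolding form using num g dp assms
    by (intro divide_right_mono mult_left_mono) auto
  also have "\<dots> = (1 - \<alpha>) * Kf \<alpha> S ?y / Gamma (2 - \<alpha>)"
    using dp g by simp
  finally show ?thesis unfolding S_def s_def .
qed


lemma c_mono:
  assumes "0 < ta" "0 < (T - ta)/real N" "(T - ta)/real N \<le> ta / 8" "0 < \<sigma>" "0 \<le> \<alpha>" "\<alpha> < 1" "1 \<le> i" "i + 1 \<le> k"
  shows "c_coef \<alpha> \<sigma> ta T N i k \<le> c_coef \<alpha> \<sigma> ta T N (i + 1) k"
proof -
  have "c_coef \<alpha> \<sigma> ta T N i k \<le> (1 - \<alpha>) * Kf \<alpha> (sg ta T N (real k + \<sigma>)) (sg ta T N (real i)) / Gamma (2 - \<alpha>)"
    by (rule c_upper[OF assms(1-6)]) (use assms(7,8) in auto)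
  also have "\<dots> \<le> c_coef \<alpha> \<sigma> ta T N (i + 1) k"
    using c_lower[of ta T N \<sigma> \<alpha> "i+1" k] assms by simp
  finally show ?thesis .
qed

lemma bern1:
  fixes X d \<alpha> :: real
  assumes "0 < X" "0 \<le> d" "0 \<le> \<alpha>" "\<alpha> \<le> 1"
  shows "(X + d) powr (1 - \<alpha>) - X powr (1 - \<alpha>) \<le> (1 - \<alpha>) * X powr (-\<alpha>) * d"
proof -
  have "((X + d) / X) powr (1 - \<alpha>) * 1 powr \<alpha> \<le> (1 - \<alpha>) * ((X + d) / X) + \<alpha> * 1"
    by (rule Youngs_inequality_0) (use assms in auto)
  hence "((X + d) / X) powr (1 - \<alpha>) \<le> 1 + (1 - \<alpha>) * d / X"
    using assms by (simp add: field_simps)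
  hence "(X + d) powr (1 - \<alpha>) / X powr (1 - \<alpha>) \<le> 1 + (1 - \<alpha>) * d / X"
    using assms by (simp add: powr_divide)
  hence "(X + d) powr (1 - \<alpha>) \<le> X powr (1 - \<alpha>) * (1 + (1 - \<alpha>) * d / X)"
    using assms by (simp add: divide_le_eq mult.commute)
  also have "\<dots> = X powr (1 - \<alpha>) + (1 - \<alpha>) * (X powr (1 - \<alpha>) / X) * d"
    by (simp add: algebra_simps)
  also have "X powr (1 - \<alpha>) / X = X powr (-\<alpha>)"
    using powr_1m[OF assms(1), of \<alpha>] assms by simp
  finally show ?thesis by simp
qed

lemma bern2:
  fixes X d \<alpha> :: real
  assumes "0 < X" "0 \<le> d" "0 \<le> \<alpha>"
  shows "X powr (-\<alpha>) - (X + d) powr (-\<alpha>) \<le> \<alpha> * X powr (-\<alpha>) * d / X"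
proof -
  let ?z = "d / X"
  have z0: "0 \<le> ?z" using assms by simp
  have "\<alpha> * ln (1 + ?z) \<le> \<alpha> * ?z"
    by (rule mult_left_mono[OF ln_add_one_self_le_self[OF z0] assms(3)])
  hence "1 - \<alpha> * ?z \<le> 1 - \<alpha> * ln (1 + ?z)" by linarith
  also have "\<dots> \<le> exp (- \<alpha> * ln (1 + ?z))" using exp_ge_add_one_self[of "- \<alpha> * ln (1 + ?z)"] by simp
  also have "exp (- \<alpha> * ln (1 + ?z)) = (1 + ?z) powr (-\<alpha>)"
    using z0 by (simp add: powr_def)
  finally have b: "1 - \<alpha> * ?z \<le> (1 + ?z) powr (-\<alpha>)" .
  have "X + d = X * (1 + ?z)" using assms by (simp add: field_simps)
  hence "(X + d) powr (-\<alpha>) = X powr (-\<alpha>) * (1 + ?z) powr (-\<alpha>)"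
    using assms z0 by (simp add: powr_mult)
  moreover have "X powr (-\<alpha>) * (1 - \<alpha> * ?z) \<le> X powr (-\<alpha>) * (1 + ?z) powr (-\<alpha>)"
    using b by (intro mult_left_mono) auto
  ultimately show ?thesis by (simp add: algebra_simps)
qed

lemma alik_core:
  fixes X h \<Delta> E \<sigma> \<alpha> :: real
  assumes "0 < h" "h \<le> \<Delta>" "\<sigma> * h \<le> X" "0 < \<sigma>" "\<sigma> \<le> 1" "\<sigma> = 1 - \<alpha>/2" "0 \<le> E" "E \<le> h * \<Delta> / 2" "0 \<le> \<alpha>"
  shows "\<sigma>^2 * h * (X * \<Delta> + \<alpha> * E) \<le> X^2 * \<Delta>"
proof -
  have d0: "0 < \<Delta>" using assms by simp
  have X0: "0 \<le> X" using assms by (meson mult_nonneg_nonneg less_imp_le order_trans)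
  have a: "\<sigma> * h - \<sigma>^2 * h \<le> X - \<sigma>^2 * h" using assms by simp
  have b: "0 \<le> \<sigma> * h - \<sigma>^2 * h"
  proof -
    have "\<sigma>^2 * h \<le> \<sigma> * h" using assms by (simp add: power2_eq_square mult_right_mono mult_left_le_one_le)
    thus ?thesis by simp
  qed
  have "(\<sigma> * h) * \<Delta> * (\<sigma> * h - \<sigma>^2 * h) \<le> X * \<Delta> * (X - \<sigma>^2 * h)"
    using assms a b d0 X0 by (intro mult_mono) auto
  moreover have "(\<sigma> * h) * \<Delta> * (\<sigma> * h - \<sigma>^2 * h) = \<sigma>^2 * h * (h * \<Delta>) * (1 - \<sigma>)"
    by (simp add: power2_eq_square algebra_simps)
  moreover have "1 - \<sigma> = \<alpha> / 2" using assms by simp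
  moreover have "\<sigma>^2 * h * \<alpha> * E \<le> \<sigma>^2 * h * (h * \<Delta>) * (\<alpha> / 2)"
  proof -
    have "\<alpha> * E \<le> \<alpha> * (h * \<Delta> / 2)" using assms by (intro mult_left_mono) auto
    hence "\<sigma>^2 * h * (\<alpha> * E) \<le> \<sigma>^2 * h * (\<alpha> * (h * \<Delta> / 2))" using assms by (intro mult_left_mono) auto
    thus ?thesis by (simp add: algebra_simps)
  qed
  ultimately have "\<sigma>^2 * h * \<alpha> * E \<le> X * \<Delta> * (X - \<sigma>^2 * h)" by simp
  thus ?thesis by (simp add: power2_eq_square algebra_simps)
qed


lemma c_alik:
  assumes "0 < ta" "0 < (T - ta)/real N" "(T - ta)/real N \<le> ta / 8" "0 < \<alpha>" "\<alpha> < 1" "\<sigma> = 1 - \<alpha>/2" "1 \<le> k"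
  shows "\<sigma>^2 * c_coef \<alpha> \<sigma> ta T N k k \<le> (1 - \<alpha>) * c_coef \<alpha> \<sigma> ta T N (k + 1) k"
proof -
  define S where "S = sg ta T N (real k + \<sigma>)"
  define s where "s = (\<lambda>j. sg ta T N (real j))"
  have sig: "0 < \<sigma>" "\<sigma> \<le> 1" using assms by auto
  have sS: "\<And>j. j \<le> k \<Longrightarrow> s j < S" unfolding s_def S_def using sg_lt_S assms(1,2) sig by blast
  have sm: "\<And>j j'. j < j' \<Longrightarrow> s j < s j'" unfolding s_def using sg_mono_nat assms(1,2) by blast
  have g: "0 < Gamma (2 - \<alpha>)" using Gamma2_pos assms by blast
  define X where "X = S - s k"
  define h where "h = s (k+1) - s k"
  define \<Delta> where "\<Delta> = s k - s (k-1)"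
  define P where "P = X powr (-\<alpha>)"
  have X0: "0 < X" unfolding X_def using sS[of k] by simp
  have h0: "0 < h" unfolding h_def using sm[of k "k+1"] by simp
  have d0: "0 < \<Delta>" unfolding \<Delta>_def using sm[of "k-1" k] assms by simp
  have P0: "0 < P" unfolding P_def using X0 by simp
  have hD: "h \<le> \<Delta>"
  proof -
    obtain m where m: "k = Suc m" using assms by (cases k) auto
    show ?thesis unfolding h_def \<Delta>_def s_def m using Delta_decr[OF assms(1,2), of m] by simp
  qed
  have Dh: "\<Delta> \<le> 5/4 * h"
  proof -
    obtain m where m: "k = Suc m" using assms by (cases k) auto
    show ?thesis unfolding h_def \<Delta>_def s_def m using Delta_ratio[OF assms(1,2,3), of m] by simp
  qed
  have Xh: "\<sigma> * h \<le> X"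
    unfolding X_def h_def S_def s_def using X_lower[OF assms(1,2), of \<sigma> k] sig by simp
  have Yeq: "S - s (k-1) = X + \<Delta>" unfolding X_def \<Delta>_def by simp
  have Kk: "Kf \<alpha> S (s k) = P" unfolding Kf_def P_def X_def by simp
  have Kk1: "Kf \<alpha> S (s (k-1)) = (X + \<Delta>) powr (-\<alpha>)" unfolding Kf_def Yeq by simp
  define L where "L = (Kf \<alpha> S (s k) - Kf \<alpha> S (s (k-1))) / (s k - s (k-1))"
  have LB: "L \<le> \<alpha> * P / X"
  proof -
    have "L * \<Delta> = P - (X + \<Delta>) powr (-\<alpha>)" unfolding L_def Kk Kk1 \<Delta>_def[symmetric] using d0 by simp
    also have "\<dots> \<le> \<alpha> * P * \<Delta> / X" unfolding P_def by (rule bern2) (use X0 d0 assms in auto)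
    also have "\<alpha> * P * \<Delta> / X = (\<alpha> * P / X) * \<Delta>" by simp
    finally have "L * \<Delta> \<le> (\<alpha> * P / X) * \<Delta>" .
    thus ?thesis using d0 mult_le_cancel_right_pos by blast
  qed
  have L0: "0 \<le> L" unfolding L_def using Kf_mono[of \<alpha> "s (k-1)" "s k" S] sS[of k] sm[of "k-1" k] assms by simp
  define E where "E = (if k = 1 then 0 else (s (k-1) - s (k-2))^3 / (6 * (s k - s (k-2))))"
  have E0: "0 \<le> E"
  proof (cases "k = 1")
    case False
    have "s (k-2) < s (k-1)" "s (k-2) < s k" using sm False assms by auto
    thus ?thesis unfolding E_def using False by simp
  qed (simp add: E_def)
  have Eb: "E \<le> h * \<Delta> / 2"
  proof (cases "k = 1")
    case False
    define \<Delta>' where "\<Delta>' = s (k-1) - s (k-2)"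
    have dp': "0 < \<Delta>'" unfolding \<Delta>'_def using sm[of "k-2" "k-1"] False assms by simp
    have D'e: "s k - s (k-2) = \<Delta> + \<Delta>'" unfolding \<Delta>_def \<Delta>'_def by simp
    have rat: "\<Delta>' \<le> 5/4 * \<Delta>"
    proof -
      define m where "m = k - 2"
      have km: "k = Suc (Suc m)" using False assms unfolding m_def by auto
      have "sg ta T N (real (Suc m)) - sg ta T N (real m) \<le> 5/4 * (sg ta T N (real (Suc (Suc m))) - sg ta T N (real (Suc m)))"
        by (rule Delta_ratio[OF assms(1,2,3)])
      thus ?thesis unfolding \<Delta>'_def \<Delta>_def s_def km by simp
    qed
    have "E = \<Delta>'^3 / (6 * (s k - s (k-2)))" unfolding E_def \<Delta>'_def using False by simp
    also have "\<dots> = \<Delta>'^3 / (6 * (\<Delta> + \<Delta>'))" unfolding D'e ..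
    also have "\<dots> = (\<Delta>' * \<Delta>' / 6) * (\<Delta>' / (\<Delta> + \<Delta>'))"
      using dp' d0 by (simp add: power3_eq_cube field_simps)
    also have "\<dots> \<le> (\<Delta>' * \<Delta>' / 6) * 1"
      using dp' d0 by (intro mult_left_mono) auto
    also have "(\<Delta>' * \<Delta>' / 6) * 1 \<le> h * \<Delta> / 2"
    proof -
      have "\<Delta>' * \<Delta>' \<le> (5/4 * \<Delta>) * (5/4 * (5/4 * h))"
        using rat Dh dp' d0 by (intro mult_mono) auto
      hence "\<Delta>' * \<Delta>' \<le> 125/64 * (h * \<Delta>)" by (simp add: algebra_simps)
      moreover have "0 < h * \<Delta>" using h0 d0 by simp
      ultimately show ?thesis by linarith
    qed
    finally show ?thesis .
  qed (use h0 d0 in \<open>simp add: E_def\<close>)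
  have extra: "(if k = 1 then 0 else 2 / (s k - s (k-2)) * J1 \<alpha> S (s (k-2)) (s (k-1))) \<le> L * E"
  proof (cases "k = 1")
    case True thus ?thesis unfolding E_def by simp
  next
    case False
    have k2: "k - 2 < k - 1" "k - 1 < k" using False assms by auto
    have M: "J1 \<alpha> S (s (k-2)) (s (k-1)) \<le> L * (s (k-1) - s (k-2))^3/12"
      unfolding L_def by (rule M4) (use sm[OF k2(1)] sm[OF k2(2)] sS[of k] assms in auto)
    have Dp: "0 < s k - s (k-2)" using sm[of "k-2" k] k2 by simp
    have "2 / (s k - s (k-2)) * J1 \<alpha> S (s (k-2)) (s (k-1)) \<le> 2 / (s k - s (k-2)) * (L * (s (k-1) - s (k-2))^3/12)"
      using M Dp by (intro mult_left_mono) auto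
    also have "\<dots> = L * E" unfolding E_def using False Dp by (simp add: field_simps)
    finally show ?thesis using False by simp
  qed
  have J1k: "0 \<le> J1 \<alpha> S (s (k-1)) (s k)"
    by (rule M1) (use sm[of "k-1" k] sS[of k] assms in auto)
  have Dk: "0 < s (k+1) - s (k-1)" using sm[of "k-1" "k+1"] by simp
  have formk: "c_coef \<alpha> \<sigma> ta T N k k =
    (1 - \<alpha>) * (J0 \<alpha> S (s (k-1)) (s k) - 2 / (s (k+1) - s (k-1)) * J1 \<alpha> S (s (k-1)) (s k)
       + (if k = 1 then 0 else 2 / (s k - s (k-2)) * J1 \<alpha> S (s (k-2)) (s (k-1))))
     / (Gamma (2 - \<alpha>) * \<Delta>)"
    unfolding S_def s_def \<Delta>_def by (rule c_coef_form) (use assms(1,2,4-7) sig in auto)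
  have J0k: "(1 - \<alpha>) * J0 \<alpha> S (s (k-1)) (s k) = (X + \<Delta>) powr (1 - \<alpha>) - X powr (1 - \<alpha>)"
    unfolding J0_def Yeq X_def[symmetric] using assms by simp
  have num: "(1 - \<alpha>) * (J0 \<alpha> S (s (k-1)) (s k) - 2 / (s (k+1) - s (k-1)) * J1 \<alpha> S (s (k-1)) (s k)
       + (if k = 1 then 0 else 2 / (s k - s (k-2)) * J1 \<alpha> S (s (k-2)) (s (k-1))))
       \<le> (1 - \<alpha>) * P * (\<Delta> + \<alpha> * E / X)"
  proof -
    have "J0 \<alpha> S (s (k-1)) (s k) - 2 / (s (k+1) - s (k-1)) * J1 \<alpha> S (s (k-1)) (s k)
       + (if k = 1 then 0 else 2 / (s k - s (k-2)) * J1 \<alpha> S (s (k-2)) (s (k-1)))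
       \<le> J0 \<alpha> S (s (k-1)) (s k) + \<alpha> * P / X * E"
    proof -
      have "0 \<le> 2 / (s (k+1) - s (k-1)) * J1 \<alpha> S (s (k-1)) (s k)" using J1k Dk by simp
      moreover have "L * E \<le> \<alpha> * P / X * E" using LB E0 by (rule mult_right_mono)
      ultimately show ?thesis using extra by linarith
    qed
    hence "(1 - \<alpha>) * (J0 \<alpha> S (s (k-1)) (s k) - 2 / (s (k+1) - s (k-1)) * J1 \<alpha> S (s (k-1)) (s k)
       + (if k = 1 then 0 else 2 / (s k - s (k-2)) * J1 \<alpha> S (s (k-2)) (s (k-1))))
       \<le> (1 - \<alpha>) * (J0 \<alpha> S (s (k-1)) (s k) + \<alpha> * P / X * E)"
      using assms by (intro mult_left_mono) auto
    also have "\<dots> = ((X + \<Delta>) powr (1 - \<alpha>) - X powr (1 - \<alpha>)) + (1 - \<alpha>) * (\<alpha> * P / X * E)"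
      using J0k by (simp add: algebra_simps)
    also have "\<dots> \<le> (1 - \<alpha>) * P * \<Delta> + (1 - \<alpha>) * (\<alpha> * P / X * E)"
      using bern1[of X \<Delta> \<alpha>] X0 d0 assms unfolding P_def by simp
    also have "\<dots> = (1 - \<alpha>) * P * (\<Delta> + \<alpha> * E / X)" by (simp add: algebra_simps)
    finally show ?thesis .
  qed
  have ck: "c_coef \<alpha> \<sigma> ta T N k k \<le> (1 - \<alpha>) * P * (\<Delta> + \<alpha> * E / X) / (Gamma (2 - \<alpha>) * \<Delta>)"
    unfolding formk using num g d0 by (intro divide_right_mono) auto
  have lnX: "ln (tg ta T N (real k + \<sigma>) / tg ta T N (real k)) = X"
    unfolding X_def S_def s_def by (rule ln_div_tg) (use assms(1,2,4-7) sig in auto)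
  have lnh: "ln (tg ta T N (real k + 1) / tg ta T N (real k)) = h"
    unfolding h_def s_def using ln_div_tg[of ta T N "real k + 1" "real k"] assms by (simp add: add.commute)
  have bk: "0 \<le> b_coef \<alpha> \<sigma> ta T N k k"
  proof -
    have "b_coef \<alpha> \<sigma> ta T N k k = (1 - \<alpha>) * (2 / (s (k+1) - s (k-1))) * J1 \<alpha> S (s (k-1)) (s k)"
      unfolding S_def s_def by (rule b_coef_eq) (use assms(1,2,4-7) sig in auto)
    thus ?thesis using J1k Dk assms by simp
  qed
  have formk1: "c_coef \<alpha> \<sigma> ta T N (k + 1) k = (b_coef \<alpha> \<sigma> ta T N k k + X powr (1 - \<alpha>)) / (Gamma (2 - \<alpha>) * h)"
    unfolding c_coef_def lnX lnh using assms by simp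
  have XP: "X powr (1 - \<alpha>) = X * P" unfolding P_def using powr_1m[OF X0] .
  have ck1: "X * P / (Gamma (2 - \<alpha>) * h) \<le> c_coef \<alpha> \<sigma> ta T N (k + 1) k"
    unfolding formk1 XP using bk g h0 by (intro divide_right_mono) auto
  have core: "\<sigma>^2 * h * (X * \<Delta> + \<alpha> * E) \<le> X^2 * \<Delta>"
    by (rule alik_core[OF h0 hD Xh sig assms(6) E0 Eb]) (use assms in auto)
  have key: "\<sigma>^2 * ((\<Delta> + \<alpha> * E / X) / \<Delta>) \<le> X / h"
  proof -
    have "\<sigma>^2 * ((\<Delta> + \<alpha> * E / X) / \<Delta>) = \<sigma>^2 * h * (X * \<Delta> + \<alpha> * E) / (X * \<Delta> * h)"
      using X0 d0 h0 by (simp add: field_simps)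
    also have "\<dots> \<le> X^2 * \<Delta> / (X * \<Delta> * h)"
      using core X0 d0 h0 by (intro divide_right_mono) auto
    also have "\<dots> = X / h" using X0 d0 h0 by (simp add: power2_eq_square field_simps)
    finally show ?thesis .
  qed
  have "\<sigma>^2 * c_coef \<alpha> \<sigma> ta T N k k \<le> \<sigma>^2 * ((1 - \<alpha>) * P * (\<Delta> + \<alpha> * E / X) / (Gamma (2 - \<alpha>) * \<Delta>))"
    using ck by (intro mult_left_mono) auto
  also have "\<dots> = ((1 - \<alpha>) * P / Gamma (2 - \<alpha>)) * (\<sigma>^2 * ((\<Delta> + \<alpha> * E / X) / \<Delta>))"
    using g d0 by (simp add: field_simps)
  also have "\<dots> \<le> ((1 - \<alpha>) * P / Gamma (2 - \<alpha>)) * (X / h)"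
    using key P0 g assms by (intro mult_left_mono) auto
  also have "\<dots> = (1 - \<alpha>) * (X * P / (Gamma (2 - \<alpha>) * h))"
    using g h0 by (simp add: field_simps)
  also have "\<dots> \<le> (1 - \<alpha>) * c_coef \<alpha> \<sigma> ta T N (k + 1) k"
    using ck1 assms by (intro mult_left_mono) auto
  finally show ?thesis .
qed


lemma Gamma_2m: "(\<alpha>::real) < 1 \<Longrightarrow> Gamma (2 - \<alpha>) = (1 - \<alpha>) * Gamma (1 - \<alpha>)"
proof -
  assume a: "\<alpha> < 1"
  have "1 - \<alpha> \<notin> \<int>\<^sub>\<le>\<^sub>0" using a nonpos_Ints_nonpos by fastforce
  thus ?thesis using Gamma_plus1[of "1 - \<alpha>"] by (simp add: algebra_simps)
qed

lemma Gamma1_pos: "(\<alpha>::real) < 1 \<Longrightarrow> 0 < Gamma (1 - \<alpha>)"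
  by (rule Gamma_real_pos) simp

lemma c_pos:
  assumes "0 < ta" "0 < (T - ta)/real N" "0 < \<sigma>" "0 \<le> \<alpha>" "\<alpha> < 1" "1 \<le> i" "i \<le> k"
  shows "0 < c_coef \<alpha> \<sigma> ta T N i k"
proof -
  have "0 < (1 - \<alpha>) * Kf \<alpha> (sg ta T N (real k + \<sigma>)) (sg ta T N (real (i-1))) / Gamma (2 - \<alpha>)"
    using Kf_pos[of "sg ta T N (real (i-1))" "sg ta T N (real k + \<sigma>)" \<alpha>] sg_lt_S[OF assms(1,2,3), of "i-1" k]
      Gamma2_pos[of \<alpha>] assms by simp
  also have "\<dots> \<le> c_coef \<alpha> \<sigma> ta T N i k" by (rule c_lower[OF assms])
  finally show ?thesis .
qed

lemma c_last_mono:
  assumes "0 < ta" "0 < (T - ta)/real N" "(T - ta)/real N \<le> ta / 8" "0 < \<alpha>" "\<alpha> < 1" "\<sigma> = 1 - \<alpha>/2" "1 \<le> k"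
  shows "c_coef \<alpha> \<sigma> ta T N k k \<le> c_coef \<alpha> \<sigma> ta T N (k + 1) k"
proof -
  have A: "\<sigma>^2 * c_coef \<alpha> \<sigma> ta T N k k \<le> (1 - \<alpha>) * c_coef \<alpha> \<sigma> ta T N (k + 1) k"
    by (rule c_alik[OF assms])
  have cp: "0 < c_coef \<alpha> \<sigma> ta T N k k" by (rule c_pos) (use assms(1,2,4-7) in auto)
  have "\<sigma>^2 = 1 - \<alpha> + \<alpha>^2/4" unfolding assms(6) by (simp add: power2_eq_square field_simps)
  moreover have "0 \<le> \<alpha>^2/4" by simp
  ultimately have "1 - \<alpha> \<le> \<sigma>^2" by linarith
  hence "(1 - \<alpha>) * c_coef \<alpha> \<sigma> ta T N k k \<le> \<sigma>^2 * c_coef \<alpha> \<sigma> ta T N k k"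
    using cp by (intro mult_right_mono) auto
  hence "(1 - \<alpha>) * c_coef \<alpha> \<sigma> ta T N k k \<le> (1 - \<alpha>) * c_coef \<alpha> \<sigma> ta T N (k + 1) k" using A by linarith
  thus ?thesis using assms by simp
qed

lemma c1_lower:
  assumes "0 < ta" "0 < (T - ta)/real N" "(T - ta)/real N \<le> ta / 8" "0 < \<alpha>" "\<alpha> < 1" "\<sigma> = 1 - \<alpha>/2"
  shows "((real k + \<sigma>) * ((T - ta)/real N) / ta) powr (-\<alpha>) / Gamma (1 - \<alpha>) \<le> c_coef \<alpha> \<sigma> ta T N 1 k"
proof -
  have sig: "0 < \<sigma>" "\<sigma> \<le> 1" "1 - \<alpha> \<le> \<sigma>" using assms by auto
  define X0 where "X0 = sg ta T N (real k + \<sigma>) - sg ta T N 0"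
  have X0p: "0 < X0" unfolding X0_def using sg_strict[OF assms(1,2), of 0 "real k + \<sigma>"] sig by simp
  have X0u: "X0 \<le> (real k + \<sigma>) * ((T - ta)/real N) / ta"
    unfolding X0_def by (rule S0_upper) (use assms(1,2) sig in auto)
  have pw: "((real k + \<sigma>) * ((T - ta)/real N) / ta) powr (-\<alpha>) \<le> X0 powr (-\<alpha>)"
    by (rule powr_mono2') (use X0p X0u assms in auto)
  have g1: "0 < Gamma (1 - \<alpha>)" using Gamma1_pos assms by blast
  have g2: "Gamma (2 - \<alpha>) = (1 - \<alpha>) * Gamma (1 - \<alpha>)" using Gamma_2m assms by blast
  have key: "X0 powr (-\<alpha>) / Gamma (1 - \<alpha>) \<le> c_coef \<alpha> \<sigma> ta T N 1 k"
  proof (cases "k = 0")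
    case False
    have "(1 - \<alpha>) * Kf \<alpha> (sg ta T N (real k + \<sigma>)) (sg ta T N (real (1-1))) / Gamma (2 - \<alpha>) \<le> c_coef \<alpha> \<sigma> ta T N 1 k"
      by (rule c_lower) (use assms(1,2,4,5,6) sig False in auto)
    moreover have "(1 - \<alpha>) * Kf \<alpha> (sg ta T N (real k + \<sigma>)) (sg ta T N (real (1-1))) / Gamma (2 - \<alpha>) = X0 powr (-\<alpha>) / Gamma (1 - \<alpha>)"
      unfolding g2 Kf_def X0_def using assms by simp
    ultimately show ?thesis by simp
  next
    case True
    define h where "h = sg ta T N 1 - sg ta T N 0"
    have hp: "0 < h" unfolding h_def using sg_strict[OF assms(1,2), of 0 1] by simp
    have Xh: "\<sigma> * h \<le> X0" unfolding h_def X0_def using X_lower[OF assms(1,2), of \<sigma> 0] sig True by simp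
    have l1: "ln (tg ta T N \<sigma> / tg ta T N 0) = X0" unfolding X0_def using True ln_div_tg[of ta T N \<sigma> 0] assms sig by simp
    have l2: "ln (tg ta T N 1 / tg ta T N 0) = h" unfolding h_def using ln_div_tg[of ta T N 1 0] assms by simp
    have c: "c_coef \<alpha> \<sigma> ta T N 1 k = X0 powr (1 - \<alpha>) / (Gamma (2 - \<alpha>) * h)"
      unfolding c_coef_def using True l1 l2 by simp
    have XP: "X0 powr (1 - \<alpha>) = X0 * X0 powr (-\<alpha>)" by (rule powr_1m[OF X0p])
    have "X0 powr (-\<alpha>) / Gamma (1 - \<alpha>) = (1 - \<alpha>) * h * X0 powr (-\<alpha>) / (Gamma (2 - \<alpha>) * h)"
      unfolding g2 using hp assms by simp
    also have "\<dots> \<le> X0 * X0 powr (-\<alpha>) / (Gamma (2 - \<alpha>) * h)"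
    proof (rule divide_right_mono)
      have "(1 - \<alpha>) * h \<le> X0" using Xh sig hp by (smt (verit) mult_right_mono)
      thus "(1 - \<alpha>) * h * X0 powr (-\<alpha>) \<le> X0 * X0 powr (-\<alpha>)" by (rule mult_right_mono) simp
      show "0 \<le> Gamma (2 - \<alpha>) * h" using g1 g2 hp assms by simp
    qed
    finally show ?thesis unfolding c XP .
  qed
  have "((real k + \<sigma>) * ((T - ta)/real N) / ta) powr (-\<alpha>) / Gamma (1 - \<alpha>) \<le> X0 powr (-\<alpha>) / Gamma (1 - \<alpha>)"
    using pw g1 by (rule divide_right_mono[OF _ less_imp_le])
  thus ?thesis using key by linarith
qed

lemma gR_0: "gR \<beta> 0 = 1" by (simp add: gR_def)
lemma gR_1: "gR \<beta> 1 = - \<beta>" by (simp add: gR_def)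
lemma gR_Suc0: "gR \<beta> (Suc 0) = - \<beta>" by (simp add: gR_def)

lemma gR_Suc: "gR \<beta> (Suc k) = gR \<beta> k * ((real k - \<beta>) / (real k + 1))"
proof -
  have E: "\<beta> * (\<beta> gchoose k) = of_nat k * (\<beta> gchoose k) + of_nat (Suc k) * (\<beta> gchoose (Suc k))"
    by (rule gbinomial_mult_1)
  have "(real k + 1) * (\<beta> gchoose (Suc k)) = (\<beta> - real k) * (\<beta> gchoose k)"
    using E by (simp add: algebra_simps)
  hence C: "(\<beta> gchoose (Suc k)) = (\<beta> - real k) * (\<beta> gchoose k) / (real k + 1)"
    by (simp add: field_simps)
  have "gR \<beta> (Suc k) = - ((-1)^k * (\<beta> gchoose (Suc k)))" unfolding gR_def by simp
  also have "\<dots> = (-1)^k * (\<beta> gchoose k) * ((real k - \<beta>) / (real k + 1))"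
    unfolding C by (simp add: field_simps)
  finally show ?thesis unfolding gR_def .
qed

lemma gR_2: "gR \<beta> 2 = \<beta> * (\<beta> - 1) / 2"
proof -
  have "gR \<beta> 2 = gR \<beta> (Suc 1)" by (simp add: numeral_2_eq_2)
  also have "\<dots> = - \<beta> * ((1 - \<beta>) / 2)" unfolding gR_Suc gR_1 by simp
  finally show ?thesis by (simp add: field_simps)
qed

lemma gR_2': "gR \<beta> (Suc (Suc 0)) = \<beta> * (\<beta> - 1) / 2"
  using gR_2 by (simp add: numeral_2_eq_2)

lemma gR_pos:
  assumes "1 < \<beta>" "\<beta> < 2" "2 \<le> k"
  shows "0 < gR \<beta> k"
  using assms(3)
proof (induction k rule: nat_induct_at_least)
  case base
  have "0 < \<beta> * (\<beta> - 1)" using assms by simp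
  thus ?case using gR_2[of \<beta>] by simp
next
  case (Suc k)
  have "0 < (real k - \<beta>) / (real k + 1)" using Suc.hyps assms by simp
  with Suc.IH have "0 < gR \<beta> k * ((real k - \<beta>) / (real k + 1))" by (rule mult_pos_pos)
  thus ?case by (simp only: gR_Suc)
qed

definition Gs :: "real \<Rightarrow> nat \<Rightarrow> real" where
  "Gs \<beta> n = (\<Sum>k\<le>n. gR \<beta> k)"

lemma alg_cancel: "(C::real) \<noteq> 0 \<Longrightarrow> b \<noteq> 0 \<Longrightarrow> - C / b * (g * (D / C)) = - g * D / b"
  by simp

lemma alg_cancel2: "(C::real) \<noteq> 0 \<Longrightarrow> b \<noteq> 0 \<Longrightarrow> - C / b * g * (1 - b / C) = - g * (C - b) / b"
proof -
  assume a: "C \<noteq> 0" "b \<noteq> 0"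
  have "1 - b / C = (C - b) / C" using a by (simp add: field_simps)
  hence "- C / b * g * (1 - b / C) = - C / b * (g * ((C - b) / C))" by simp
  also have "\<dots> = - g * (C - b) / b" by (rule alg_cancel[OF a])
  finally show ?thesis .
qed

lemma Gs_closed:
  assumes "0 < \<beta>"
  shows "Gs \<beta> n = - (real n + 1) / \<beta> * gR \<beta> (Suc n)"
proof (induction n)
  case 0 thus ?case using assms by (simp add: Gs_def gR_0 gR_Suc0)
next
  case (Suc n)
  define C1 where "C1 = real n + 1"
  define C2 where "C2 = real n + 2"
  define g where "g = gR \<beta> (Suc n)"
  have c: "C1 \<noteq> 0" "C2 \<noteq> 0" "\<beta> \<noteq> 0" using assms unfolding C1_def C2_def by linarith+
  have g2: "gR \<beta> (Suc (Suc n)) = g * ((C1 - \<beta>) / C2)"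
    unfolding g_def gR_Suc[of \<beta> "Suc n"] C1_def C2_def by (simp add: add.commute)
  have e2: "real (Suc n) + 1 = C2" unfolding C2_def by simp
  have "Gs \<beta> (Suc n) = Gs \<beta> n + g" by (simp add: Gs_def g_def)
  also have "\<dots> = - C1 / \<beta> * g + g" using Suc unfolding C1_def g_def by simp
  also have "\<dots> = - g * (C1 - \<beta>) / \<beta>" using c by (simp add: field_simps)
  also have "\<dots> = - C2 / \<beta> * (g * ((C1 - \<beta>) / C2))" using alg_cancel[OF c(2,3)] by simp
  also have "\<dots> = - (real (Suc n) + 1) / \<beta> * gR \<beta> (Suc (Suc n))" unfolding e2 g2 ..
  finally show ?case .
qed

lemma Gs_Suc:
  assumes "0 < \<beta>"
  shows "Gs \<beta> (Suc n) = Gs \<beta> n * (1 - \<beta> / (real n + 1))"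
proof -
  define C1 where "C1 = real n + 1"
  define C2 where "C2 = real n + 2"
  define g where "g = gR \<beta> (Suc n)"
  have c: "C1 \<noteq> 0" "C2 \<noteq> 0" "\<beta> \<noteq> 0" using assms unfolding C1_def C2_def by linarith+
  have g2: "gR \<beta> (Suc (Suc n)) = g * ((C1 - \<beta>) / C2)"
    unfolding g_def gR_Suc[of \<beta> "Suc n"] C1_def C2_def by (simp add: add.commute)
  have e2: "real (Suc n) + 1 = C2" unfolding C2_def by simp
  have "Gs \<beta> (Suc n) = - (real (Suc n) + 1) / \<beta> * gR \<beta> (Suc (Suc n))" by (rule Gs_closed[OF assms])
  also have "\<dots> = - C2 / \<beta> * (g * ((C1 - \<beta>) / C2))" unfolding e2 g2 ..
  also have "\<dots> = - g * (C1 - \<beta>) / \<beta>" by (rule alg_cancel[OF c(2,3)])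
  also have "\<dots> = - C1 / \<beta> * g * (1 - \<beta> / C1)" by (rule alg_cancel2[OF c(1,3), symmetric])
  also have "\<dots> = Gs \<beta> n * (1 - \<beta> / (real n + 1))" using Gs_closed[OF assms] unfolding g_def C1_def by simp
  finally show ?thesis .
qed

lemma Gs_1: "Gs \<beta> 1 = 1 - \<beta>" by (simp add: Gs_def gR_0 gR_Suc0)

lemma Gs_neg_mono:
  assumes "1 < \<beta>" "\<beta> < 2" "1 \<le> n"
  shows "Gs \<beta> n < 0 \<and> (\<forall>m. n \<le> m \<longrightarrow> Gs \<beta> n \<le> Gs \<beta> m)"
proof -
  have step: "Gs \<beta> n \<le> Gs \<beta> (Suc n) \<and> Gs \<beta> (Suc n) < 0" if "1 \<le> n" "Gs \<beta> n < 0" for n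
  proof -
    have f: "0 < 1 - \<beta> / (real n + 1)" "1 - \<beta> / (real n + 1) \<le> 1"
      using that assms by (auto simp: field_simps)
    have "Gs \<beta> (Suc n) = Gs \<beta> n * (1 - \<beta> / (real n + 1))" using Gs_Suc assms by simp
    moreover have "Gs \<beta> n \<le> Gs \<beta> n * (1 - \<beta> / (real n + 1))"
      using f that by (simp add: mult_le_cancel_left1)
    moreover have "Gs \<beta> n * (1 - \<beta> / (real n + 1)) < 0" using f that by (simp add: mult_neg_pos)
    ultimately show ?thesis by simp
  qed
  have neg: "Gs \<beta> n < 0" if "1 \<le> n" for n
    using that
  proof (induction n rule: nat_induct_at_least)
    case base thus ?case using Gs_1[of \<beta>] assms by simp
  next
    case (Suc n) thus ?case using step by blast
  qed
  have mono: "Gs \<beta> n \<le> Gs \<beta> (n + d)" for d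
  proof (induction d)
    case (Suc d)
    have "Gs \<beta> (n + d) \<le> Gs \<beta> (Suc (n + d))" using step[of "n+d"] neg[of "n+d"] assms by simp
    thus ?case using Suc by simp
  qed simp
  show ?thesis using neg[OF assms(3)] mono by (metis le_add_diff_inverse)
qed


lemma PsiR_neg:
  assumes "1 < \<beta>" "\<beta> < 2"
  shows "PsiR \<beta> < 0"
proof -
  have "cos (pi * \<beta> / 2) < 0"
    by (rule cos_lt_zero_pi) (use assms pi_gt_zero in \<open>auto simp: field_simps\<close>)
  thus ?thesis unfolding PsiR_def by (simp add: divide_neg_pos)
qed

lemma rR_0: "rR \<beta> 0 = 2 * PsiR \<beta> * (\<beta> / 2 * gR \<beta> 1 + (2 - \<beta>) / 2 * gR \<beta> 0)"
  by (simp add: rR_def)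

lemma r0_pos:
  assumes "1 < \<beta>" "\<beta> < 2"
  shows "0 < rR \<beta> 0"
proof -
  have "\<beta> / 2 * gR \<beta> 1 + (2 - \<beta>) / 2 * gR \<beta> 0 = (1 - \<beta>) * (2 + \<beta>) / 2"
    by (simp add: gR_Suc0 gR_0 field_simps)
  moreover have "(1 - \<beta>) * (2 + \<beta>) / 2 < 0" using assms by (simp add: mult_neg_pos)
  ultimately show ?thesis unfolding rR_0 using PsiR_neg[OF assms] by (simp add: mult_neg_neg)
qed

lemma rR_nonpos:
  assumes "1 < \<beta>" "\<beta> < 2" "1 \<le> k"
  shows "rR \<beta> k \<le> 0"
proof (cases "k = 1")
  case True
  have eq: "\<beta> / 2 * gR \<beta> 0 + (2 - \<beta>) / 2 * gR \<beta> 1 + \<beta> / 2 * gR \<beta> 2 = \<beta> * (\<beta> - 1) * (\<beta> + 2) / 4"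
    by (simp add: gR_0 gR_Suc0 gR_2 field_simps)
  moreover have "0 \<le> \<beta> * (\<beta> - 1) * (\<beta> + 2) / 4" using assms by simp
  ultimately have Z: "0 \<le> \<beta> / 2 * gR \<beta> 0 + (2 - \<beta>) / 2 * gR \<beta> 1 + \<beta> / 2 * gR \<beta> 2" by linarith
  have "rR \<beta> k = PsiR \<beta> * (\<beta> / 2 * gR \<beta> 0 + (2 - \<beta>) / 2 * gR \<beta> 1 + \<beta> / 2 * gR \<beta> 2)"
    using True by (simp add: rR_def)
  thus ?thesis using Z PsiR_neg[OF assms(1,2)] by (simp add: mult_nonpos_nonneg)
next
  case False
  hence k2: "2 \<le> k" using assms by simp
  have "0 \<le> \<beta> / 2 * gR \<beta> (k + 1) + (2 - \<beta>) / 2 * gR \<beta> k"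
    using gR_pos[OF assms(1,2), of k] gR_pos[OF assms(1,2), of "k+1"] k2 assms by simp
  thus ?thesis using False k2 PsiR_neg[OF assms(1,2)] unfolding rR_def
    by (simp add: mult_nonpos_nonneg)
qed

definition Pr :: "real \<Rightarrow> nat \<Rightarrow> real" where
  "Pr \<beta> q = (\<Sum>d=1..q. rR \<beta> d)"

lemma Pr_formula:
  assumes "1 \<le> q"
  shows "Pr \<beta> q = PsiR \<beta> * (\<beta> / 2 * Gs \<beta> (q + 1) + (2 - \<beta>) / 2 * Gs \<beta> q)
                  - PsiR \<beta> * (\<beta> / 2 * gR \<beta> 1 + (2 - \<beta>) / 2 * gR \<beta> 0)"
  using assms
proof (induction q rule: nat_induct_at_least)
  case base
  have "Gs \<beta> (1 + 1) = gR \<beta> 0 + gR \<beta> 1 + gR \<beta> 2" by (simp add: Gs_def numeral_2_eq_2)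
  moreover have "Gs \<beta> 1 = gR \<beta> 0 + gR \<beta> 1" by (simp add: Gs_def)
  moreover have "Pr \<beta> 1 = PsiR \<beta> * (\<beta> / 2 * gR \<beta> 0 + (2 - \<beta>) / 2 * gR \<beta> 1 + \<beta> / 2 * gR \<beta> 2)"
    by (simp add: Pr_def rR_def)
  ultimately show ?case by (simp add: field_simps)
next
  case (Suc q)
  have "Pr \<beta> (Suc q) = Pr \<beta> q + rR \<beta> (Suc q)" by (simp add: Pr_def)
  moreover have "rR \<beta> (Suc q) = PsiR \<beta> * (\<beta> / 2 * gR \<beta> (Suc q + 1) + (2 - \<beta>) / 2 * gR \<beta> (Suc q))"
    using Suc.hyps by (simp add: rR_def)
  moreover have "Gs \<beta> (Suc q + 1) = Gs \<beta> (q + 1) + gR \<beta> (Suc q + 1)" by (simp add: Gs_def)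
  moreover have "Gs \<beta> (Suc q) = Gs \<beta> q + gR \<beta> (Suc q)" by (simp add: Gs_def)
  ultimately show ?case using Suc.IH by (simp add: field_simps)
qed

lemma row_split:
  assumes "1 \<le> j" "j \<le> M - 1"
  shows "(\<Sum>k=1..M-1. rZ \<beta> (int j - int k)) = rR \<beta> 0 + Pr \<beta> (j - 1) + Pr \<beta> (M - 1 - j)"
proof -
  have M: "M - 1 = j + (M - 1 - j)" using assms by simp
  have "(\<Sum>k=1..M-1. rZ \<beta> (int j - int k)) = (\<Sum>k=1..j. rZ \<beta> (int j - int k)) + (\<Sum>k=j+1..j+(M-1-j). rZ \<beta> (int j - int k))"
    by (subst M, rule sum.ub_add_nat) (use assms in simp)
  moreover have "(\<Sum>k=1..j. rZ \<beta> (int j - int k)) = rR \<beta> 0 + Pr \<beta> (j - 1)"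
  proof -
    have "(\<Sum>k=1..j. rZ \<beta> (int j - int k)) = (\<Sum>k=1..j. rZ \<beta> (int j - int (j + 1 - k)))"
      by (rule sum.atLeastAtMost_rev)
    also have "\<dots> = (\<Sum>k=1..j. rR \<beta> (k - 1))"
      by (rule sum.cong) (auto simp: rZ_def of_nat_diff nat_diff_distrib)
    also have "\<dots> = (\<Sum>d=0..j-1. rR \<beta> d)"
    proof -
      have "(\<Sum>k=1..j. rR \<beta> (k - 1)) = (\<Sum>k=0+1..(j-1)+1. rR \<beta> (k - 1))" using assms by simp
      also have "\<dots> = (\<Sum>d=0..j-1. rR \<beta> (d + 1 - 1))" by (rule sum.shift_bounds_cl_nat_ivl)
      also have "\<dots> = (\<Sum>d=0..j-1. rR \<beta> d)" by simp
      finally show ?thesis .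
    qed
    also have "\<dots> = rR \<beta> 0 + Pr \<beta> (j - 1)"
      unfolding Pr_def by (simp add: sum.atLeast_Suc_atMost)
    finally show ?thesis .
  qed
  moreover have "(\<Sum>k=j+1..j+(M-1-j). rZ \<beta> (int j - int k)) = Pr \<beta> (M - 1 - j)"
  proof -
    have "(\<Sum>k=1+j..(M-1-j)+j. rZ \<beta> (int j - int k)) = (\<Sum>d=1..M-1-j. rZ \<beta> (int j - int (d + j)))"
      by (rule sum.shift_bounds_cl_nat_ivl)
    also have "\<dots> = Pr \<beta> (M - 1 - j)" unfolding Pr_def
      by (rule sum.cong) (auto simp: rZ_def)
    finally show ?thesis by (simp add: add.commute)
  qed
  ultimately show ?thesis by simp
qed


lemma Phi_lower:
  assumes "1 < \<beta>" "\<beta> < 2" "1 \<le> q" "q + 1 \<le> M"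
  shows "PsiR \<beta> * Gs \<beta> M \<le> PsiR \<beta> * (\<beta> / 2 * Gs \<beta> (q + 1) + (2 - \<beta>) / 2 * Gs \<beta> q)"
proof -
  have P: "PsiR \<beta> < 0" by (rule PsiR_neg[OF assms(1,2)])
  have m1: "Gs \<beta> (q+1) \<le> Gs \<beta> M" using Gs_neg_mono[OF assms(1,2), of "q+1"] assms by simp
  have m2: "Gs \<beta> q \<le> Gs \<beta> M" using Gs_neg_mono[OF assms(1,2), of q] assms by simp
  have "PsiR \<beta> * Gs \<beta> M \<le> PsiR \<beta> * Gs \<beta> (q+1)" using m1 P by (simp add: mult_left_mono_neg)
  moreover have "PsiR \<beta> * Gs \<beta> M \<le> PsiR \<beta> * Gs \<beta> q" using m2 P by (simp add: mult_left_mono_neg)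
  ultimately have "\<beta> / 2 * (PsiR \<beta> * Gs \<beta> M) + (2 - \<beta>) / 2 * (PsiR \<beta> * Gs \<beta> M)
     \<le> \<beta> / 2 * (PsiR \<beta> * Gs \<beta> (q+1)) + (2 - \<beta>) / 2 * (PsiR \<beta> * Gs \<beta> q)"
  proof -
    assume a: "PsiR \<beta> * Gs \<beta> M \<le> PsiR \<beta> * Gs \<beta> (q+1)" "PsiR \<beta> * Gs \<beta> M \<le> PsiR \<beta> * Gs \<beta> q"
    have "\<beta> / 2 * (PsiR \<beta> * Gs \<beta> M) \<le> \<beta> / 2 * (PsiR \<beta> * Gs \<beta> (q+1))"
      by (rule mult_left_mono[OF a(1)]) (use assms in simp)
    moreover have "(2 - \<beta>) / 2 * (PsiR \<beta> * Gs \<beta> M) \<le> (2 - \<beta>) / 2 * (PsiR \<beta> * Gs \<beta> q)"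
      by (rule mult_left_mono[OF a(2)]) (use assms in simp)
    ultimately show ?thesis by (rule add_mono)
  qed
  moreover have "\<beta> / 2 * (PsiR \<beta> * Gs \<beta> M) + (2 - \<beta>) / 2 * (PsiR \<beta> * Gs \<beta> M) = PsiR \<beta> * Gs \<beta> M"
    by (simp add: field_simps)
  moreover have "PsiR \<beta> * (\<beta> / 2 * Gs \<beta> (q + 1) + (2 - \<beta>) / 2 * Gs \<beta> q)
     = \<beta> / 2 * (PsiR \<beta> * Gs \<beta> (q+1)) + (2 - \<beta>) / 2 * (PsiR \<beta> * Gs \<beta> q)"
    by (simp add: algebra_simps)
  ultimately show ?thesis by linarith
qed

lemma lam_pos:
  assumes "1 < \<beta>" "\<beta> < 2" "1 \<le> M"
  shows "0 < PsiR \<beta> * Gs \<beta> M"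
  using PsiR_neg[OF assms(1,2)] Gs_neg_mono[OF assms] by (simp add: mult_neg_neg)

lemma row_lower:
  assumes "1 < \<beta>" "\<beta> < 2" "3 \<le> M" "1 \<le> j" "j \<le> M - 1"
  shows "PsiR \<beta> * Gs \<beta> M \<le> (\<Sum>k=1..M-1. rZ \<beta> (int j - int k))"
proof -
  define C where "C = PsiR \<beta> * (\<beta> / 2 * gR \<beta> 1 + (2 - \<beta>) / 2 * gR \<beta> 0)"
  define lam where "lam = PsiR \<beta> * Gs \<beta> M"
  have r0: "rR \<beta> 0 = 2 * C" unfolding C_def rR_0 by simp
  have C0: "0 < C" using r0_pos[OF assms(1,2)] r0 by simp
  have l0: "0 < lam" unfolding lam_def using lam_pos[OF assms(1,2)] assms by simp
  have Pq: "lam - C \<le> Pr \<beta> q" if "1 \<le> q" "q + 2 \<le> M" for q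
  proof -
    have "Pr \<beta> q = PsiR \<beta> * (\<beta> / 2 * Gs \<beta> (q + 1) + (2 - \<beta>) / 2 * Gs \<beta> q) - C"
      unfolding C_def by (rule Pr_formula[OF that(1)])
    moreover have "lam \<le> PsiR \<beta> * (\<beta> / 2 * Gs \<beta> (q + 1) + (2 - \<beta>) / 2 * Gs \<beta> q)"
      unfolding lam_def by (rule Phi_lower) (use assms that in auto)
    ultimately show ?thesis by simp
  qed
  have P0: "Pr \<beta> 0 = 0" by (simp add: Pr_def)
  have rs: "(\<Sum>k=1..M-1. rZ \<beta> (int j - int k)) = 2 * C + Pr \<beta> (j - 1) + Pr \<beta> (M - 1 - j)"
    using row_split[OF assms(4,5)] r0 by simp
  show ?thesis
  proof (cases "j = 1")
    case True
    hence "lam - C \<le> Pr \<beta> (M - 1 - j)" using Pq[of "M - 1 - j"] assms by simp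
    thus ?thesis unfolding rs lam_def[symmetric] using True P0 C0 by simp
  next
    case False
    hence a: "lam - C \<le> Pr \<beta> (j - 1)" using Pq[of "j - 1"] assms by simp
    show ?thesis
    proof (cases "j = M - 1")
      case True
      thus ?thesis unfolding rs lam_def[symmetric] using a P0 C0 by simp
    next
      case False
      hence "lam - C \<le> Pr \<beta> (M - 1 - j)" using Pq[of "M - 1 - j"] assms by simp
      thus ?thesis unfolding rs lam_def[symmetric] using a l0 by simp
    qed
  qed
qed

lemma quad_form_lower:
  fixes A :: "nat \<Rightarrow> nat \<Rightarrow> real" and v :: "nat \<Rightarrow> real" and I :: "nat set"
  assumes fin: "finite I" and sym: "\<And>j k. A j k = A k j"
    and off: "\<And>j k. j \<noteq> k \<Longrightarrow> A j k \<le> 0"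
  shows "(\<Sum>j\<in>I. (\<Sum>k\<in>I. A j k) * v j ^ 2) \<le> (\<Sum>j\<in>I. \<Sum>k\<in>I. A j k * v k * v j)"
proof -
  have d: "(\<Sum>j\<in>I. \<Sum>k\<in>I. A j k * v k * v j) - (\<Sum>j\<in>I. (\<Sum>k\<in>I. A j k) * v j ^ 2)
      = (\<Sum>j\<in>I. \<Sum>k\<in>I. A j k * v j * (v k - v j))"
  proof -
    have "(\<Sum>j\<in>I. \<Sum>k\<in>I. A j k * v k * v j) - (\<Sum>j\<in>I. (\<Sum>k\<in>I. A j k) * v j ^ 2)
        = (\<Sum>j\<in>I. (\<Sum>k\<in>I. A j k * v k * v j) - (\<Sum>k\<in>I. A j k * v j ^ 2))"
      by (simp add: sum_subtractf sum_distrib_right)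
    also have "\<dots> = (\<Sum>j\<in>I. \<Sum>k\<in>I. A j k * v k * v j - A j k * v j ^ 2)"
      by (simp add: sum_subtractf)
    also have "\<dots> = (\<Sum>j\<in>I. \<Sum>k\<in>I. A j k * v j * (v k - v j))"
      by (intro sum.cong refl) (simp add: power2_eq_square algebra_simps)
    finally show ?thesis .
  qed
  have sw: "(\<Sum>j\<in>I. \<Sum>k\<in>I. A j k * v j * (v k - v j)) = (\<Sum>j\<in>I. \<Sum>k\<in>I. A j k * v k * (v j - v k))"
    by (subst sum.swap) (simp add: sym)
  have "2 * (\<Sum>j\<in>I. \<Sum>k\<in>I. A j k * v j * (v k - v j)) = (\<Sum>j\<in>I. \<Sum>k\<in>I. - A j k * (v j - v k)^2)"
  proof -
    have "2 * (\<Sum>j\<in>I. \<Sum>k\<in>I. A j k * v j * (v k - v j))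
        = (\<Sum>j\<in>I. \<Sum>k\<in>I. A j k * v j * (v k - v j)) + (\<Sum>j\<in>I. \<Sum>k\<in>I. A j k * v k * (v j - v k))"
      using sw by simp
    also have "\<dots> = (\<Sum>j\<in>I. \<Sum>k\<in>I. A j k * v j * (v k - v j) + A j k * v k * (v j - v k))"
      by (simp add: sum.distrib)
    also have "\<dots> = (\<Sum>j\<in>I. \<Sum>k\<in>I. - A j k * (v j - v k)^2)"
      by (intro sum.cong refl) (simp add: power2_eq_square algebra_simps)
    finally show ?thesis .
  qed
  moreover have "0 \<le> (\<Sum>j\<in>I. \<Sum>k\<in>I. - A j k * (v j - v k)^2)"
  proof (intro sum_nonneg)
    fix j k
    show "0 \<le> - A j k * (v j - v k)^2"
    proof (cases "j = k")
      case False thus ?thesis using off[OF False] by (simp add: mult_nonpos_nonneg)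
    qed simp
  qed
  ultimately have "0 \<le> (\<Sum>j\<in>I. \<Sum>k\<in>I. A j k * v j * (v k - v j))" by simp
  thus ?thesis using d by simp
qed


lemma ln_1mx_lower:
  fixes x :: real
  assumes "0 \<le> x" "x \<le> 1/2"
  shows "- x - x^2 \<le> ln (1 - x)"
proof -
  define f where "f = (\<lambda>t::real. ln (1 - t) + t + t^2)"
  have "f 0 \<le> f x"
  proof (rule DERIV_nonneg_imp_nondecreasing[OF assms(1)])
    fix t assume t: "0 \<le> t" "t \<le> x"
    hence t1: "0 < 1 - t" using assms by simp
    have "(f has_real_derivative (- 1 / (1 - t) + 1 + 2 * t)) (at t)"
      unfolding f_def using t1 by (auto intro!: derivative_eq_intros simp: field_simps)
    moreover have "0 \<le> - 1 / (1 - t) + 1 + 2 * t"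
    proof -
      have "0 \<le> t * (1 - 2 * t)" using t assms by (intro mult_nonneg_nonneg) auto
      moreover have "(1 + 2 * t) * (1 - t) = 1 + t * (1 - 2 * t)" by (simp add: algebra_simps)
      ultimately have "1 \<le> (1 + 2 * t) * (1 - t)" by linarith
      hence "1 / (1 - t) \<le> 1 + 2 * t" using t1 by (simp add: divide_le_eq)
      thus ?thesis by simp
    qed
    ultimately show "\<exists>y. DERIV f t :> y \<and> 0 \<le> y" by blast
  qed
  thus ?thesis unfolding f_def by simp
qed


lemma exp_1mx_lower:
  fixes x :: real
  assumes "0 \<le> x" "x \<le> 1/2"
  shows "exp (- x - x^2) \<le> 1 - x"
proof -
  have "exp (- x - x^2) \<le> exp (ln (1 - x))" using ln_1mx_lower[OF assms] by simp
  thus ?thesis using assms by simp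
qed

lemma prod_exp_lower:
  fixes \<beta> :: real
  assumes "0 \<le> \<beta>" "\<beta> \<le> 2" "3 \<le> M"
  shows "exp (- (\<beta> * (\<Sum>j=4..M. 1 / real j) + \<beta>^2 * (\<Sum>j=4..M. 1 / (real j)^2)))
         \<le> (\<Prod>j=4..M. 1 - \<beta> / real j)"
  using assms(3)
proof (induction M rule: nat_induct_at_least)
  case base thus ?case by simp
next
  case (Suc M)
  let ?x = "\<beta> / real (Suc M)"
  have x: "0 \<le> ?x" "?x \<le> 1/2" using assms Suc.hyps by (auto simp: field_simps)
  have e1: "(\<Sum>j=4..Suc M. 1 / real j) = (\<Sum>j=4..M. 1 / real j) + 1 / real (Suc M)"
    using Suc.hyps by simp
  have e2: "(\<Sum>j=4..Suc M. 1 / (real j)^2) = (\<Sum>j=4..M. 1 / (real j)^2) + 1 / (real (Suc M))^2"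
    using Suc.hyps by simp
  have e3: "(\<Prod>j=4..Suc M. 1 - \<beta> / real j) = (\<Prod>j=4..M. 1 - \<beta> / real j) * (1 - ?x)"
    using Suc.hyps by simp
  have ee: "- (\<beta> * (\<Sum>j=4..Suc M. 1 / real j) + \<beta>^2 * (\<Sum>j=4..Suc M. 1 / (real j)^2))
     = - (\<beta> * (\<Sum>j=4..M. 1 / real j) + \<beta>^2 * (\<Sum>j=4..M. 1 / (real j)^2)) + (- ?x - ?x^2)"
    unfolding e1 e2 by (simp add: algebra_simps power_divide)
  have "exp (- (\<beta> * (\<Sum>j=4..Suc M. 1 / real j) + \<beta>^2 * (\<Sum>j=4..Suc M. 1 / (real j)^2)))
     = exp (- (\<beta> * (\<Sum>j=4..M. 1 / real j) + \<beta>^2 * (\<Sum>j=4..M. 1 / (real j)^2))) * exp (- ?x - ?x^2)"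
    unfolding ee by (rule exp_add)
  also have "\<dots> \<le> (\<Prod>j=4..M. 1 - \<beta> / real j) * (1 - ?x)"
  proof (rule mult_mono[OF Suc.IH exp_1mx_lower[OF x]])
    show "0 \<le> (\<Prod>j=4..M. 1 - \<beta> / real j)"
    proof (rule prod_nonneg)
      fix j assume "j \<in> {4..M}"
      hence "\<beta> / real j \<le> 1" using assms by (simp add: field_simps)
      thus "0 \<le> 1 - \<beta> / real j" by simp
    qed
  qed simp
  finally show ?case unfolding e3 .
qed

lemma harm_upper:
  assumes "3 \<le> M"
  shows "(\<Sum>j=4..M. 1 / real j) \<le> ln (real M) - ln 3"
  using assms
proof (induction M rule: nat_induct_at_least)
  case base thus ?case by simp
next
  case (Suc M)
  have M0: "0 < real M" using Suc.hyps by simp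
  have "1 / real (Suc M) = (1 / real M) / (1 + 1 / real M)" using M0 by (simp add: field_simps)
  also have "\<dots> \<le> ln (1 + 1 / real M)" by (rule ln_lower) (use M0 in simp)
  also have "ln (1 + 1 / real M) = ln (real (Suc M)) - ln (real M)"
  proof -
    have "1 + 1 / real M = real (Suc M) / real M" using M0 by (simp add: field_simps)
    thus ?thesis using M0 ln_div[of "real (Suc M)" "real M"] by simp
  qed
  finally have "1 / real (Suc M) \<le> ln (real (Suc M)) - ln (real M)" .
  thus ?case using Suc.IH Suc.hyps by simp
qed

lemma sq_upper:
  assumes "3 \<le> M"
  shows "(\<Sum>j=4..M. 1 / (real j)^2) \<le> 1/3 - 1 / real M"
  using assms
proof (induction M rule: nat_induct_at_least)
  case base thus ?case by simp
next
  case (Suc M)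
  have M0: "0 < real M" using Suc.hyps by simp
  have "1 / (real (Suc M))^2 \<le> 1 / real M - 1 / real (Suc M)"
  proof -
    have "1 / real M - 1 / real (Suc M) = 1 / (real M * real (Suc M))" using M0 by (simp add: field_simps)
    moreover have "1 / (real (Suc M))^2 \<le> 1 / (real M * real (Suc M))"
      using M0 by (intro divide_left_mono) (auto simp: power2_eq_square)
    ultimately show ?thesis by simp
  qed
  thus ?case using Suc.IH Suc.hyps by simp
qed

lemma Pd_lower:
  fixes \<beta> :: real
  assumes "0 \<le> \<beta>" "\<beta> \<le> 2" "3 \<le> M"
  shows "exp (- 9/4) * 4 powr \<beta> * real M powr (-\<beta>) \<le> (\<Prod>j=4..M. 1 - \<beta> / real j)"
proof -
  have M0: "0 < real M" using assms by simp
  have H: "(\<Sum>j=4..M. 1 / real j) \<le> ln (real M) - ln 3" by (rule harm_upper[OF assms(3)])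
  have Q: "(\<Sum>j=4..M. 1 / (real j)^2) \<le> 1/3"
    using sq_upper[OF assms(3)] M0 by (smt (verit) divide_pos_pos)
  have l43: "ln 4 - ln 3 \<le> (1/3::real)"
  proof -
    have "ln (1 + 1/3) \<le> (1/3::real)" by (rule ln_add_one_self_le_self) simp
    moreover have "ln (1 + 1/3) = ln 4 - ln (3::real)" using ln_div[of 4 3] by simp
    ultimately show ?thesis by simp
  qed
  have b2: "\<beta>^2 \<le> 4" using power_mono[of \<beta> 2 2] assms by simp
  have "\<beta> * (\<Sum>j=4..M. 1 / real j) \<le> \<beta> * (ln (real M) - ln 3)" using H assms by (intro mult_left_mono) auto
  moreover have "\<beta> * (ln (real M) - ln 3) = \<beta> * (ln (real M) - ln 4) + \<beta> * (ln 4 - ln 3)" by (simp add: algebra_simps)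
  moreover have "\<beta> * (ln 4 - ln 3) \<le> 2 / 3"
  proof -
    have "\<beta> * (ln 4 - ln 3) \<le> 2 * (1/3)"
      using l43 assms by (intro mult_mono) (auto simp: ln_div[symmetric])
    thus ?thesis by simp
  qed
  moreover have "\<beta>^2 * (\<Sum>j=4..M. 1 / (real j)^2) \<le> 4 * (1/3)"
    using b2 Q by (intro mult_mono) (auto intro: sum_nonneg)
  ultimately have S: "\<beta> * (\<Sum>j=4..M. 1 / real j) + \<beta>^2 * (\<Sum>j=4..M. 1 / (real j)^2) \<le> \<beta> * (ln (real M) - ln 4) + 9/4"
    by linarith
  have "exp (- 9/4) * 4 powr \<beta> * real M powr (-\<beta>) = exp (- (\<beta> * (ln (real M) - ln 4) + 9/4))"
    using M0 by (simp add: powr_def exp_add[symmetric] exp_diff algebra_simps exp_minus field_simps)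
  also have "\<dots> \<le> exp (- (\<beta> * (\<Sum>j=4..M. 1 / real j) + \<beta>^2 * (\<Sum>j=4..M. 1 / (real j)^2)))"
    using S by simp
  also have "\<dots> \<le> (\<Prod>j=4..M. 1 - \<beta> / real j)" by (rule prod_exp_lower[OF assms])
  finally show ?thesis .
qed


lemma Gs_prod:
  assumes "0 < \<beta>" "3 \<le> M"
  shows "Gs \<beta> M = Gs \<beta> 3 * (\<Prod>j=4..M. 1 - \<beta> / real j)"
  using assms(2)
proof (induction M rule: nat_induct_at_least)
  case base thus ?case by simp
next
  case (Suc M)
  have "Gs \<beta> (Suc M) = Gs \<beta> M * (1 - \<beta> / (real M + 1))" by (rule Gs_Suc[OF assms(1)])
  also have "\<dots> = Gs \<beta> 3 * ((\<Prod>j=4..M. 1 - \<beta> / real j) * (1 - \<beta> / real (Suc M)))"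
    using Suc.IH by (simp add: add.commute)
  also have "(\<Prod>j=4..M. 1 - \<beta> / real j) * (1 - \<beta> / real (Suc M)) = (\<Prod>j=4..Suc M. 1 - \<beta> / real j)"
    using Suc.hyps by simp
  finally show ?case .
qed

lemma Gs_3: "0 < \<beta> \<Longrightarrow> Gs \<beta> 3 = (1 - \<beta>) * ((2 - \<beta>) * (3 - \<beta>) / 6)"
proof -
  assume b: "0 < \<beta>"
  have "Gs \<beta> 3 = Gs \<beta> (Suc (Suc 1))" by (simp add: numeral_3_eq_3)
  also have "\<dots> = Gs \<beta> 1 * (1 - \<beta> / 2) * (1 - \<beta> / 3)"
    unfolding Gs_Suc[OF b] by (simp add: numeral_2_eq_2 numeral_3_eq_3)
  also have "\<dots> = (1 - \<beta>) * ((2 - \<beta>) * (3 - \<beta>) / 6)" unfolding Gs_1 by (simp add: field_simps)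
  finally show ?thesis .
qed

lemma lam_lower:
  assumes "1 < \<beta>" "\<beta> < 2" "3 \<le> M"
  shows "cstar \<beta> / 2 * real M powr (-\<beta>) \<le> PsiR \<beta> * Gs \<beta> M"
proof -
  have P: "PsiR \<beta> < 0" by (rule PsiR_neg[OF assms(1,2)])
  define c3 where "c3 = PsiR \<beta> * ((1 - \<beta>) * ((2 - \<beta>) * (3 - \<beta>) / 6))"
  have c3p: "0 < c3" unfolding c3_def using P assms by (intro mult_neg_neg) (auto intro!: mult_neg_pos)
  have "PsiR \<beta> * Gs \<beta> M = c3 * (\<Prod>j=4..M. 1 - \<beta> / real j)"
  proof -
    have g: "Gs \<beta> M = Gs \<beta> 3 * (\<Prod>j=4..M. 1 - \<beta> / real j)" by (rule Gs_prod) (use assms in auto)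
    have g3: "Gs \<beta> 3 = (1 - \<beta>) * ((2 - \<beta>) * (3 - \<beta>) / 6)" using Gs_3 assms by simp
    show ?thesis unfolding g g3 c3_def by (simp only: mult.assoc)
  qed
  moreover have "c3 * (exp (- 9/4) * 4 powr \<beta> * real M powr (-\<beta>)) \<le> c3 * (\<Prod>j=4..M. 1 - \<beta> / real j)"
    using Pd_lower[of \<beta> M] assms c3p by (intro mult_left_mono) auto
  moreover have "c3 * (exp (- 9/4) * 4 powr \<beta> * real M powr (-\<beta>)) = cstar \<beta> / 2 * real M powr (-\<beta>)"
    unfolding c3_def cstar_def by (simp add: field_simps)
  ultimately show ?thesis by linarith
qed

lemma phi_step:
  fixes vm vm1 vi vi1 \<sigma> :: real
  defines "\<phi> \<equiv> \<lambda>Y. Y^2/2 - (1 - \<sigma>) * (vm - vm1) * Y"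
  shows "(vi - vi1) * (\<sigma> * vm + (1 - \<sigma>) * vm1) - (vi^2 - vi1^2)/2 = \<phi> (vm - vi1) - \<phi> (vm - vi)"
  unfolding \<phi>_def by (simp add: power2_eq_square field_simps)

lemma phi_lower:
  fixes Y \<delta> \<sigma> :: real
  shows "- ((1 - \<sigma>)^2 * \<delta>^2 / 2) \<le> Y^2/2 - (1 - \<sigma>) * \<delta> * Y"
proof -
  have "0 \<le> (Y - (1 - \<sigma>) * \<delta>)^2 / 2" by simp
  moreover have "(Y - (1 - \<sigma>) * \<delta>)^2 / 2 = Y^2/2 - (1 - \<sigma>) * \<delta> * Y + (1 - \<sigma>)^2 * \<delta>^2 / 2"
    by (simp add: power2_eq_square field_simps)
  ultimately show ?thesis by linarith
qed

lemma energy_partial0: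
  fixes c :: "nat \<Rightarrow> real" and \<phi> :: "nat \<Rightarrow> real" and \<mu> :: real
  assumes "\<And>i. 1 \<le> i \<Longrightarrow> i \<le> Suc j \<Longrightarrow> - \<mu> \<le> \<phi> i"
    and "0 \<le> c 1" and "\<And>i. 1 \<le> i \<Longrightarrow> i < Suc j \<Longrightarrow> c i \<le> c (i+1)"
  shows "- \<mu> * c (Suc j) - c (Suc j) * \<phi> (Suc j + 1) \<le> (\<Sum>i=1..Suc j. c i * (\<phi> i - \<phi> (i+1)))"
  using assms
proof (induction j)
  case 0
  have "c 1 * (- \<mu>) \<le> c 1 * \<phi> 1" by (rule mult_left_mono) (use 0 in auto)
  thus ?case by (simp add: algebra_simps)
next
  case (Suc j)
  have IH: "- \<mu> * c (Suc j) - c (Suc j) * \<phi> (Suc j + 1) \<le> (\<Sum>i=1..Suc j. c i * (\<phi> i - \<phi> (i+1)))"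
    using Suc by auto
  have inc: "0 \<le> c (Suc j + 1) - c (Suc j)" using Suc.prems(3)[of "Suc j"] by simp
  have ph: "- \<mu> \<le> \<phi> (Suc j + 1)" using Suc.prems(1)[of "Suc j + 1"] by simp
  have "(c (Suc j + 1) - c (Suc j)) * (- \<mu>) \<le> (c (Suc j + 1) - c (Suc j)) * \<phi> (Suc j + 1)" using ph inc by (rule mult_left_mono)
  hence "- \<mu> * c (Suc j + 1) - c (Suc j + 1) * \<phi> (Suc j + 2) \<le> - \<mu> * c (Suc j) - c (Suc j) * \<phi> (Suc j + 1) + c (Suc j + 1) * (\<phi> (Suc j + 1) - \<phi> (Suc j + 2))"
    by (simp add: algebra_simps)
  also have "\<dots> \<le> (\<Sum>i=1..Suc j. c i * (\<phi> i - \<phi> (i+1))) + c (Suc j + 1) * (\<phi> (Suc j + 1) - \<phi> (Suc j + 2))"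
    using IH by simp
  also have "\<dots> = (\<Sum>i=1..Suc (Suc j). c i * (\<phi> i - \<phi> (i+1)))"
    by simp
  finally show ?case by simp
qed

lemma energy_partial:
  fixes c :: "nat \<Rightarrow> real" and \<phi> :: "nat \<Rightarrow> real" and \<mu> :: real
  assumes "\<And>i. 1 \<le> i \<Longrightarrow> i \<le> j \<Longrightarrow> - \<mu> \<le> \<phi> i"
    and "0 \<le> c 1" and "\<And>i. 1 \<le> i \<Longrightarrow> i < j \<Longrightarrow> c i \<le> c (i+1)" and "1 \<le> j"
  shows "- \<mu> * c j - c j * \<phi> (j+1) \<le> (\<Sum>i=1..j. c i * (\<phi> i - \<phi> (i+1)))"
proof -
  obtain j' where j: "j = Suc j'" using assms(4) by (cases j) auto
  show ?thesis unfolding j by (rule energy_partial0) (use assms j in auto)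
qed

lemma cfac: "c * a * w - c * b / 2 = c * (a * w - b / 2)" for c a w b :: real
  by (simp add: algebra_simps)

lemma energy:
  fixes c v :: "nat \<Rightarrow> real" and m :: nat and \<sigma> :: real
  assumes m1: "1 \<le> m" and c1: "0 \<le> c 1" and cm: "0 \<le> c m"
    and mono: "\<And>i. 1 \<le> i \<Longrightarrow> i + 1 < m \<Longrightarrow> c i \<le> c (i+1)"
    and last: "2 \<le> m \<Longrightarrow> \<sigma>^2 * c (m-1) \<le> (2 * \<sigma> - 1) * c m"
    and sig: "1/2 \<le> \<sigma>" "\<sigma> \<le> 1"
  shows "(\<Sum>i=1..m. c i * (v i^2 - v (i-1)^2)) / 2
         \<le> (\<Sum>i=1..m. c i * (v i - v (i-1))) * (\<sigma> * v m + (1 - \<sigma>) * v (m-1))"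
proof -
  define \<delta> where "\<delta> = v m - v (m-1)"
  define \<phi> where "\<phi> = (\<lambda>Y. Y^2/2 - (1 - \<sigma>) * \<delta> * Y)"
  define ph where "ph = (\<lambda>i. \<phi> (v m - v (i-1)))"
  define \<mu> where "\<mu> = (1 - \<sigma>)^2 * \<delta>^2 / 2"
  have tm: "c i * (v i - v (i-1)) * (\<sigma> * v m + (1 - \<sigma>) * v (m-1)) - c i * (v i^2 - v (i-1)^2) / 2
      = c i * (ph i - ph (i+1))" if "1 \<le> i" for i
  proof -
    have "(v i - v (i-1)) * (\<sigma> * v m + (1 - \<sigma>) * v (m-1)) - (v i^2 - v (i-1)^2)/2 = ph i - ph (i+1)"
      unfolding ph_def \<phi>_def \<delta>_def using phi_step[of "v i" "v (i-1)" \<sigma> "v m" "v (m-1)"] by simp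
    hence "c i * ((v i - v (i-1)) * (\<sigma> * v m + (1 - \<sigma>) * v (m-1)) - (v i^2 - v (i-1)^2)/2) = c i * (ph i - ph (i+1))"
      by simp
    thus ?thesis by (simp only: cfac)
  qed
  have diff: "(\<Sum>i=1..m. c i * (v i - v (i-1))) * (\<sigma> * v m + (1 - \<sigma>) * v (m-1))
       - (\<Sum>i=1..m. c i * (v i^2 - v (i-1)^2)) / 2 = (\<Sum>i=1..m. c i * (ph i - ph (i+1)))"
  proof -
    have "(\<Sum>i=1..m. c i * (v i - v (i-1))) * (\<sigma> * v m + (1 - \<sigma>) * v (m-1))
       - (\<Sum>i=1..m. c i * (v i^2 - v (i-1)^2)) / 2
       = (\<Sum>i=1..m. c i * (v i - v (i-1)) * (\<sigma> * v m + (1 - \<sigma>) * v (m-1)) - c i * (v i^2 - v (i-1)^2) / 2)"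
      by (simp add: sum_distrib_right sum_subtractf sum_divide_distrib)
    also have "\<dots> = (\<Sum>i=1..m. c i * (ph i - ph (i+1)))"
      by (rule sum.cong[OF refl], rule tm) simp
    finally show ?thesis .
  qed
  have phlow: "- \<mu> \<le> ph i" for i unfolding ph_def \<phi>_def \<mu>_def by (rule phi_lower)
  have phm: "ph m = (\<sigma> - 1/2) * \<delta>^2" unfolding ph_def \<phi>_def \<delta>_def by (simp add: power2_eq_square field_simps)
  have ph0: "ph (m+1) = 0" unfolding ph_def \<phi>_def by simp
  have "0 \<le> (\<Sum>i=1..m. c i * (ph i - ph (i+1)))"
  proof (cases "m = 1")
    case True
    have "0 \<le> c 1 * ((\<sigma> - 1/2) * \<delta>^2)" using c1 sig by simp
    thus ?thesis using True phm ph0 by simp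
  next
    case False
    hence m2: "2 \<le> m" using m1 by simp
    have P: "- \<mu> * c (m-1) - c (m-1) * ph (m-1+1) \<le> (\<Sum>i=1..m-1. c i * (ph i - ph (i+1)))"
      by (rule energy_partial[where \<phi> = ph]) (use phlow c1 mono m2 in auto)
    have e: "m - 1 + 1 = m" using m2 by simp
    have split: "(\<Sum>i=1..m. c i * (ph i - ph (i+1))) = (\<Sum>i=1..m-1. c i * (ph i - ph (i+1))) + c m * ph m"
    proof -
      have "{1..m} = insert m {1..m-1}" using m2 by auto
      moreover have "m \<notin> {1..m-1}" using m2 by auto
      ultimately show ?thesis using ph0 by simp
    qed
    have L: "\<sigma>^2 * c (m-1) \<le> (2 * \<sigma> - 1) * c m" using last m2 by simp
    have "0 \<le> - \<mu> * c (m-1) + (c m - c (m-1)) * ((\<sigma> - 1/2) * \<delta>^2)"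
    proof -
      have "- \<mu> * c (m-1) + (c m - c (m-1)) * ((\<sigma> - 1/2) * \<delta>^2) = (\<delta>^2 / 2) * ((2 * \<sigma> - 1) * c m - \<sigma>^2 * c (m-1))"
        unfolding \<mu>_def by (simp add: power2_eq_square field_simps)
      moreover have "0 \<le> (\<delta>^2 / 2) * ((2 * \<sigma> - 1) * c m - \<sigma>^2 * c (m-1))" using L by simp
      ultimately show ?thesis by simp
    qed
    hence "0 \<le> - \<mu> * c (m-1) + (c m - c (m-1)) * ph m" using phm by simp
    moreover have P': "- \<mu> * c (m-1) - c (m-1) * ph m \<le> (\<Sum>i=1..m-1. c i * (ph i - ph (i+1)))"
      using P unfolding e .
    moreover have "(c m - c (m-1)) * ph m = c m * ph m - c (m-1) * ph m" by (simp add: algebra_simps)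
    ultimately show ?thesis using split by linarith
  qed
  thus ?thesis using diff by simp
qed

lemma abel_sum:
  fixes c y :: "nat \<Rightarrow> real"
  shows "(\<Sum>i=1..n+1. c i * (y i - y (i-1))) = c (n+1) * y (n+1) - c 1 * y 0 - (\<Sum>i=1..n. (c (i+1) - c i) * y i)"
proof (induction n)
  case 0 thus ?case by (simp add: algebra_simps)
next
  case (Suc n)
  have "(\<Sum>i=1..Suc n+1. c i * (y i - y (i-1))) = (\<Sum>i=1..n+1. c i * (y i - y (i-1))) + c (n+2) * (y (n+2) - y (n+1))"
    by simp
  also have "\<dots> = c (Suc n+1) * y (Suc n+1) - c 1 * y 0 - (\<Sum>i=1..Suc n. (c (i+1) - c i) * y i)"
    unfolding Suc by (simp add: algebra_simps)
  finally show ?case .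
qed

lemma gronwall:
  fixes y g :: "nat \<Rightarrow> real" and c :: "nat \<Rightarrow> nat \<Rightarrow> real" and Q :: real
  assumes rel: "\<And>n. n < nmax \<Longrightarrow> (\<Sum>i=1..n+1. c i n * (y i - y (i-1))) \<le> g n"
    and pos: "\<And>n. n < nmax \<Longrightarrow> 0 < c 1 n"
    and mono: "\<And>n i. n < nmax \<Longrightarrow> 1 \<le> i \<Longrightarrow> i \<le> n \<Longrightarrow> c i n \<le> c (i+1) n"
    and gQ: "\<And>n. n < nmax \<Longrightarrow> g n \<le> c 1 n * Q"
    and Q0: "0 \<le> Q"
  shows "j \<le> nmax \<Longrightarrow> y j \<le> y 0 + Q"
proof (induction j rule: less_induct)
  case (less j)
  show ?case
  proof (cases j)
    case 0 thus ?thesis using Q0 by simp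
  next
    case (Suc n)
    have n: "n < nmax" using less.prems Suc by simp
    have IH: "\<And>i. i \<le> n \<Longrightarrow> y i \<le> y 0 + Q" using less.IH less.prems Suc by simp
    let ?c = "\<lambda>i. c i n"
    have ab: "(\<Sum>i=1..n+1. ?c i * (y i - y (i-1))) = ?c (n+1) * y (n+1) - ?c 1 * y 0 - (\<Sum>i=1..n. (?c (i+1) - ?c i) * y i)"
      by (rule abel_sum)
    have s1: "(\<Sum>i=1..n. (?c (i+1) - ?c i) * y i) \<le> (\<Sum>i=1..n. (?c (i+1) - ?c i) * (y 0 + Q))"
      by (rule sum_mono) (use mono[OF n] IH in \<open>auto intro!: mult_left_mono\<close>)
    have tel: "(\<Sum>i=1..n. (?c (i+1) - ?c i)) = ?c (n+1) - ?c 1"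
      using sum_Suc_diff[of 1 n ?c] by (cases n) (auto)
    have s2: "(\<Sum>i=1..n. (?c (i+1) - ?c i) * (y 0 + Q)) = (?c (n+1) - ?c 1) * (y 0 + Q)"
      using tel by (simp add: sum_distrib_right[symmetric])
    have cge: "?c 1 \<le> ?c (n+1)"
    proof -
      have "?c 1 \<le> ?c (1 + k)" if "k \<le> n" for k
        using that
      proof (induction k)
        case (Suc k)
        have "?c (1 + k) \<le> ?c (1 + k + 1)" using mono[OF n, of "1+k"] Suc.prems by simp
        thus ?case using Suc by simp
      qed simp
      from this[of n] show ?thesis by simp
    qed
    have cp: "0 < ?c (n+1)" using pos[OF n] cge by simp
    have "?c (n+1) * y (n+1) \<le> g n + ?c 1 * y 0 + (?c (n+1) - ?c 1) * (y 0 + Q)"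
      using rel[OF n] ab s1 s2 by simp
    also have "\<dots> \<le> ?c 1 * Q + ?c 1 * y 0 + (?c (n+1) - ?c 1) * (y 0 + Q)"
      using gQ[OF n] by simp
    also have "\<dots> = ?c (n+1) * (y 0 + Q)" by (simp add: algebra_simps)
    finally have "?c (n+1) * y (n+1) \<le> ?c (n+1) * (y 0 + Q)" .
    hence "y (n+1) \<le> y 0 + Q" using cp by simp
    thus ?thesis using Suc by simp
  qed
qed

lemma young_ab: "0 < L \<Longrightarrow> F * v \<le> L * v^2 + F^2 / (4 * L)" for F v L :: real
proof -
  assume L: "0 < L"
  have "0 \<le> (2 * L * v - F)^2 / (4 * L)" using L by simp
  also have "(2 * L * v - F)^2 / (4 * L) = L * v^2 - F * v + F^2 / (4 * L)"
    using L by (simp add: power2_eq_square field_simps)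
  finally show ?thesis by simp
qed

lemma step_energy:
  fixes c :: "nat \<Rightarrow> real" and U :: "nat \<Rightarrow> nat \<Rightarrow> real" and F :: "nat \<Rightarrow> real"
  assumes c1: "0 \<le> c 1" and cm: "0 \<le> c (n+1)"
    and mono: "\<And>i. 1 \<le> i \<Longrightarrow> i + 1 < n + 1 \<Longrightarrow> c i \<le> c (i+1)"
    and last: "1 \<le> n \<Longrightarrow> \<sigma>^2 * c n \<le> (2 * \<sigma> - 1) * c (n+1)"
    and sig: "1/2 \<le> \<sigma>" "\<sigma> \<le> 1"
    and M3: "3 \<le> M" and b: "1 < \<beta>" "\<beta> < 2" and hh: "0 < hh"
    and bd: "U (n+1) 0 = 0" "U (n+1) M = 0" "U n 0 = 0" "U n M = 0"
    and eq: "\<And>j. j \<in> {1..M-1} \<Longrightarrow> (\<Sum>i=1..n+1. c i * (U i j - U (i-1) j))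
         + hh powr (-\<beta>) * (\<Sum>k=0..M. rZ \<beta> (int j - int k) * (\<sigma> * U (n+1) k + (1 - \<sigma>) * U n k)) = F j"
    and Lp: "0 < L" and Lle: "L \<le> hh powr (-\<beta>) * (PsiR \<beta> * Gs \<beta> M)"
  shows "(\<Sum>i=1..n+1. c i * ((\<Sum>j=1..M-1. (U i j)^2) - (\<Sum>j=1..M-1. (U (i-1) j)^2)))
         \<le> (\<Sum>j=1..M-1. (F j)^2) / (2 * L)"
proof -
  define I where "I = {1..M-1}"
  define v where "v = (\<lambda>k. \<sigma> * U (n+1) k + (1 - \<sigma>) * U n k)"
  define Dt where "Dt = (\<lambda>j. (\<Sum>i=1..n+1. c i * (U i j - U (i-1) j)))"
  have finI: "finite I" unfolding I_def by simp
  have v0: "v 0 = 0" "v M = 0" unfolding v_def using bd by simp_all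
  have Ej: "(\<Sum>i=1..n+1. c i * ((U i j)^2 - (U (i-1) j)^2)) / 2 \<le> Dt j * v j" for j
  proof -
    have "(\<Sum>i=1..n+1. c i * ((\<lambda>i. U i j) i ^ 2 - (\<lambda>i. U i j) (i-1) ^ 2)) / 2
        \<le> (\<Sum>i=1..n+1. c i * ((\<lambda>i. U i j) i - (\<lambda>i. U i j) (i-1))) * (\<sigma> * (\<lambda>i. U i j) (n+1) + (1 - \<sigma>) * (\<lambda>i. U i j) (n+1-1))"
      by (rule energy[where c = c]) (use c1 cm mono last sig in auto)
    thus ?thesis unfolding Dt_def v_def by simp
  qed
  have Esum: "(\<Sum>i=1..n+1. c i * ((\<Sum>j\<in>I. (U i j)^2) - (\<Sum>j\<in>I. (U (i-1) j)^2))) / 2 \<le> (\<Sum>j\<in>I. Dt j * v j)"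
  proof -
    have "(\<Sum>i=1..n+1. c i * ((\<Sum>j\<in>I. (U i j)^2) - (\<Sum>j\<in>I. (U (i-1) j)^2)))
        = (\<Sum>j\<in>I. \<Sum>i=1..n+1. c i * ((U i j)^2 - (U (i-1) j)^2))"
      by (subst sum.swap) (simp add: sum_subtractf[symmetric] sum_distrib_left)
    hence "(\<Sum>i=1..n+1. c i * ((\<Sum>j\<in>I. (U i j)^2) - (\<Sum>j\<in>I. (U (i-1) j)^2))) / 2
        = (\<Sum>j\<in>I. (\<Sum>i=1..n+1. c i * ((U i j)^2 - (U (i-1) j)^2)) / 2)"
      by (simp add: sum_divide_distrib)
    also have "\<dots> \<le> (\<Sum>j\<in>I. Dt j * v j)" by (rule sum_mono) (rule Ej)
    finally show ?thesis .
  qed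
  have sp: "(\<Sum>k=0..M. rZ \<beta> (int j - int k) * v k) = (\<Sum>k\<in>I. rZ \<beta> (int j - int k) * v k)" for j
  proof -
    have "{0..M} = insert 0 (insert M I)" unfolding I_def using M3 by auto
    moreover have "0 \<notin> insert M I" "M \<notin> I" unfolding I_def using M3 by auto
    ultimately show ?thesis using v0 finI by simp
  qed
  have Dt_eq: "Dt j = F j - hh powr (-\<beta>) * (\<Sum>k\<in>I. rZ \<beta> (int j - int k) * v k)" if "j \<in> I" for j
    using eq[of j] that sp[of j] unfolding Dt_def v_def I_def by (simp add: algebra_simps)
  have sumDv: "(\<Sum>j\<in>I. Dt j * v j) = (\<Sum>j\<in>I. F j * v j) - hh powr (-\<beta>) * (\<Sum>j\<in>I. \<Sum>k\<in>I. rZ \<beta> (int j - int k) * v k * v j)"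
  proof -
    have "(\<Sum>j\<in>I. Dt j * v j) = (\<Sum>j\<in>I. F j * v j - hh powr (-\<beta>) * (\<Sum>k\<in>I. rZ \<beta> (int j - int k) * v k * v j))"
    proof (rule sum.cong[OF refl])
      fix j assume j: "j \<in> I"
      have "(\<Sum>k\<in>I. rZ \<beta> (int j - int k) * v k) * v j = (\<Sum>k\<in>I. rZ \<beta> (int j - int k) * v k * v j)"
        by (simp add: sum_distrib_right)
      thus "Dt j * v j = F j * v j - hh powr (-\<beta>) * (\<Sum>k\<in>I. rZ \<beta> (int j - int k) * v k * v j)"
        unfolding Dt_eq[OF j] by (simp add: algebra_simps)
    qed
    thus ?thesis by (simp add: sum_subtractf sum_distrib_left)
  qed
  have quad: "(PsiR \<beta> * Gs \<beta> M) * (\<Sum>j\<in>I. (v j)^2) \<le> (\<Sum>j\<in>I. \<Sum>k\<in>I. rZ \<beta> (int j - int k) * v k * v j)"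
  proof -
    have "(\<Sum>j\<in>I. (\<Sum>k\<in>I. rZ \<beta> (int j - int k)) * v j ^ 2) \<le> (\<Sum>j\<in>I. \<Sum>k\<in>I. rZ \<beta> (int j - int k) * v k * v j)"
    proof (rule quad_form_lower[OF finI])
      show "\<And>j k. rZ \<beta> (int j - int k) = rZ \<beta> (int k - int j)" unfolding rZ_def by (simp add: abs_minus_commute)
      show "\<And>j k. j \<noteq> k \<Longrightarrow> rZ \<beta> (int j - int k) \<le> 0"
        unfolding rZ_def using rR_nonpos[OF b] by simp
    qed
    moreover have "(PsiR \<beta> * Gs \<beta> M) * (\<Sum>j\<in>I. (v j)^2) \<le> (\<Sum>j\<in>I. (\<Sum>k\<in>I. rZ \<beta> (int j - int k)) * v j ^ 2)"
      unfolding sum_distrib_left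
      by (rule sum_mono, rule mult_right_mono) (use row_lower[OF b M3] in \<open>auto simp: I_def\<close>)
    ultimately show ?thesis by linarith
  qed
  have young: "(\<Sum>j\<in>I. F j * v j) \<le> L * (\<Sum>j\<in>I. (v j)^2) + (\<Sum>j\<in>I. (F j)^2) / (4 * L)"
  proof -
    have "(\<Sum>j\<in>I. F j * v j) \<le> (\<Sum>j\<in>I. L * (v j)^2 + (F j)^2 / (4 * L))"
      by (rule sum_mono) (rule young_ab[OF Lp])
    thus ?thesis by (simp add: sum.distrib sum_distrib_left sum_divide_distrib)
  qed
  have nn: "0 \<le> (\<Sum>j\<in>I. (v j)^2)" by (simp add: sum_nonneg)
  have hp: "0 < hh powr (-\<beta>)" using hh by simp
  have "L * (\<Sum>j\<in>I. (v j)^2) \<le> hh powr (-\<beta>) * ((PsiR \<beta> * Gs \<beta> M) * (\<Sum>j\<in>I. (v j)^2))"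
    using Lle nn by (simp add: mult_right_mono mult.assoc[symmetric])
  also have "\<dots> \<le> hh powr (-\<beta>) * (\<Sum>j\<in>I. \<Sum>k\<in>I. rZ \<beta> (int j - int k) * v k * v j)"
    using quad hp by (intro mult_left_mono) auto
  finally have Q: "L * (\<Sum>j\<in>I. (v j)^2) \<le> hh powr (-\<beta>) * (\<Sum>j\<in>I. \<Sum>k\<in>I. rZ \<beta> (int j - int k) * v k * v j)" .
  have "(\<Sum>i=1..n+1. c i * ((\<Sum>j\<in>I. (U i j)^2) - (\<Sum>j\<in>I. (U (i-1) j)^2))) / 2 \<le> (\<Sum>j\<in>I. (F j)^2) / (4 * L)"
    using Esum sumDv young Q by linarith
  hence "(\<Sum>i=1..n+1. c i * ((\<Sum>j\<in>I. (U i j)^2) - (\<Sum>j\<in>I. (U (i-1) j)^2))) \<le> (\<Sum>j\<in>I. (F j)^2) / (2 * L)"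
    using Lp by (simp add: field_simps)
  thus ?thesis unfolding I_def .
qed


lemma cstar_pos:
  assumes "1 < \<beta>" "\<beta> < 2"
  shows "0 < cstar \<beta>"
proof -
  have "0 < (1 - \<beta>) * PsiR \<beta>" using PsiR_neg[OF assms] assms by (simp add: mult_neg_neg)
  moreover have "0 < (2 - \<beta>) * (3 - \<beta>) * 4 powr \<beta> * exp (- 9 / 4) / 3" using assms by simp
  ultimately have "0 < ((1 - \<beta>) * PsiR \<beta>) * ((2 - \<beta>) * (3 - \<beta>) * 4 powr \<beta> * exp (- 9 / 4) / 3)"
    by (rule mult_pos_pos)
  thus ?thesis unfolding cstar_def by (simp add: algebra_simps)
qed

lemma powr_cancel_aux:
  fixes x ta \<alpha> :: real
  assumes "0 < x" "0 < ta"
  shows "(x / ta) powr (-\<alpha>) * x powr \<alpha> = ta powr \<alpha>"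
proof -
  have A: "0 < x powr \<alpha>" "0 < ta powr \<alpha>" using assms by auto
  have "(x / ta) powr (-\<alpha>) = (1 / x powr \<alpha>) / (1 / ta powr \<alpha>)"
    by (simp add: powr_divide powr_minus_divide)
  thus ?thesis using A by simp
qed

theorem theorem3p1:
  fixes \<alpha> \<beta> ta T a b :: real
  assumes "0 < \<alpha>" "\<alpha> < 1" "1 < \<beta>" "\<beta> < 2"
    and "0 < ta" "ta < T" "a < b"
  shows "\<exists>\<tau>0 > 0. \<exists>h0 > 0. \<forall>(N::nat) (M::nat) u0 f U.
    0 < N \<longrightarrow> 0 < M \<longrightarrow> (T - ta) / real N \<le> \<tau>0 \<longrightarrow> (b - a) / real M \<le> h0 \<longrightarrow>
    scheme \<alpha> \<beta> (1 - \<alpha> / 2) ta T N a b M u0 f U \<longrightarrow>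
    (\<forall>n \<in> {1..N}.
       normh2 a b M (U n) \<le> normh2 a b M (U 0)
         + (b - a) powr \<beta> * Gamma (1 - \<alpha>) / (cstar \<beta> * ta powr \<alpha>)
           * Max ((\<lambda>k. ((real k + (1 - \<alpha> / 2)) * ((T - ta) / real N)) powr \<alpha>
                    * normh2 a b M (\<lambda>j. f (xg a b M j) (tg ta T N (real k + (1 - \<alpha> / 2))))) ` {..<n}))"
proof -
  have t0: "0 < ta / 8" using assms by simp
  have h00: "0 < (b - a) / 3" using assms by simp
  show ?thesis
  proof (rule exI[of _ "ta / 8"], rule conjI[OF t0], rule exI[of _ "(b - a) / 3"], rule conjI[OF h00], intro allI impI ballI)
    fix N M :: nat and u0 :: "real \<Rightarrow> real" and f :: "real \<Rightarrow> real \<Rightarrow> real" and U :: "nat \<Rightarrow> nat \<Rightarrow> real" and n1 :: nat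
    assume N0: "0 < N" and M0: "0 < M" and tle: "(T - ta) / real N \<le> ta / 8"
      and hle: "(b - a) / real M \<le> (b - a) / 3"
      and sch: "scheme \<alpha> \<beta> (1 - \<alpha> / 2) ta T N a b M u0 f U" and n1: "n1 \<in> {1..N}"
    define \<sigma> where "\<sigma> = 1 - \<alpha> / 2"
    define \<tau> where "\<tau> = (T - ta) / real N"
    define hh where "hh = (b - a) / real M"
    have tp: "0 < (T - ta) / real N" using N0 assms by simp
    have sig: "0 < \<sigma>" "\<sigma> < 1" "1/2 \<le> \<sigma>" "\<sigma> \<le> 1" "2 * \<sigma> - 1 = 1 - \<alpha>" using assms unfolding \<sigma>_def by auto
    have M3: "3 \<le> M"
    proof -
      have "(b - a) / real M \<le> (b - a) / 3" by (rule hle)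
      hence "(b - a) * 3 \<le> (b - a) * real M" using assms M0 by (simp add: field_simps)
      moreover have "0 < b - a" using assms by simp
      ultimately have "3 \<le> real M" using mult_le_cancel_left_pos by blast
      thus ?thesis by simp
    qed
    have hhp: "0 < hh" unfolding hh_def using assms M0 by simp
    define c where "c = (\<lambda>i n. c_coef \<alpha> \<sigma> ta T N i n)"
    define y where "y = (\<lambda>i. \<Sum>j=1..M-1. (U i j)^2)"
    define FF where "FF = (\<lambda>n j. f (xg a b M j) (tg ta T N (real n + \<sigma>)))"
    define L where "L = cstar \<beta> / 2 * (b - a) powr (-\<beta>)"
    have cs: "0 < cstar \<beta>" by (rule cstar_pos) (use assms in auto)
    have Lp: "0 < L" unfolding L_def using cs assms by simp
    have Lle: "L \<le> hh powr (-\<beta>) * (PsiR \<beta> * Gs \<beta> M)"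
    proof -
      have "hh powr (-\<beta>) * (cstar \<beta> / 2 * real M powr (-\<beta>)) \<le> hh powr (-\<beta>) * (PsiR \<beta> * Gs \<beta> M)"
        using lam_lower[of \<beta> M] assms M3 by (intro mult_left_mono) auto
      moreover have "hh powr (-\<beta>) * (cstar \<beta> / 2 * real M powr (-\<beta>)) = L"
      proof -
        have "hh powr (-\<beta>) * real M powr (-\<beta>) = (hh * real M) powr (-\<beta>)"
          using hhp M0 by (simp add: powr_mult)
        moreover have "hh * real M = b - a" unfolding hh_def using M0 by simp
        ultimately show ?thesis unfolding L_def by (simp add: algebra_simps)
      qed
      ultimately show ?thesis by simp
    qed
    have c1pos: "0 < c 1 n" for n
    proof -
      have "0 < real n + \<sigma>" using sig by simp
      hence "0 < (real n + \<sigma>) * ((T - ta)/real N)" using tp by (rule mult_pos_pos)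
      hence bp: "0 < (real n + \<sigma>) * ((T - ta)/real N) / ta" using assms by (intro divide_pos_pos)
      have "0 < ((real n + \<sigma>) * ((T - ta)/real N) / ta) powr (-\<alpha>)"
        using bp powr_gt_zero[of "(real n + \<sigma>) * ((T - ta)/real N) / ta" "-\<alpha>"] by linarith
      hence "0 < ((real n + \<sigma>) * ((T - ta)/real N) / ta) powr (-\<alpha>) / Gamma (1 - \<alpha>)"
        using Gamma1_pos[of \<alpha>] assms by simp
      also have "\<dots> \<le> c 1 n" unfolding c_def by (rule c1_lower[OF assms(5) tp tle assms(1,2) \<sigma>_def])
      finally show ?thesis .
    qed
    have cmono: "c i n \<le> c (i+1) n" if "1 \<le> i" "i \<le> n" for i n
    proof (cases "i = n")
      case True
      show ?thesis unfolding c_def True by (rule c_last_mono[OF assms(5) tp tle assms(1,2) \<sigma>_def]) (use that True in simp)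
    next
      case False
      show ?thesis unfolding c_def by (rule c_mono[OF assms(5) tp tle sig(1) less_imp_le[OF assms(1)] assms(2)]) (use that False in auto)
    qed
    have cnn: "0 \<le> c i n" if "1 \<le> i" "i \<le> n + 1" for i n
    proof -
      have "c 1 n \<le> c (1 + k) n" if "k \<le> n" for k
        using that
      proof (induction k)
        case (Suc k)
        have "c (1 + k) n \<le> c (1 + k + 1) n" by (rule cmono) (use Suc.prems in auto)
        thus ?case using Suc by simp
      qed simp
      moreover have "i - 1 \<le> n" "1 + (i - 1) = i" using that by auto
      ultimately have "c 1 n \<le> c i n" by metis
      thus ?thesis using c1pos[of n] by simp
    qed
    have stepE: "(\<Sum>i=1..n+1. c i n * (normh2 a b M (U i) - normh2 a b M (U (i-1))))
        \<le> normh2 a b M (FF n) * ((b - a) powr \<beta> / cstar \<beta>)" if nN: "n < N" for n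
    proof -
      have schn: "\<And>j. j \<in> {1..M-1} \<Longrightarrow> (\<Sum>i=1..n+1. c i n * (U i j - U (i-1) j))
         + hh powr (-\<beta>) * (\<Sum>k=0..M. rZ \<beta> (int j - int k) * (\<sigma> * U (n+1) k + (1 - \<sigma>) * U n k)) = FF n j"
        using sch nN unfolding scheme_def c_def hh_def FF_def \<sigma>_def by blast
      have bd: "U (n+1) 0 = 0" "U (n+1) M = 0" "U n 0 = 0" "U n M = 0"
        using sch nN unfolding scheme_def by auto
      have E: "(\<Sum>i=1..n+1. c i n * (y i - y (i-1))) \<le> (\<Sum>j=1..M-1. (FF n j)^2) / (2 * L)"
        unfolding y_def
      proof (rule step_energy[where \<beta> = \<beta> and hh = hh and M = M and \<sigma> = \<sigma>])
        show "0 \<le> c 1 n" using c1pos[of n] by simp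
        show "0 \<le> c (n+1) n" using cnn[of "n+1" n] by simp
        show "\<And>i. 1 \<le> i \<Longrightarrow> i + 1 < n + 1 \<Longrightarrow> c i n \<le> c (i+1) n" using cmono by simp
        show "1 \<le> n \<Longrightarrow> \<sigma>^2 * c n n \<le> (2 * \<sigma> - 1) * c (n+1) n"
          unfolding sig(5) c_def by (rule c_alik[OF assms(5) tp tle assms(1,2) \<sigma>_def])
      qed (use sig M3 assms hhp bd schn Lp Lle in auto)
      have "(\<Sum>i=1..n+1. c i n * (normh2 a b M (U i) - normh2 a b M (U (i-1))))
          = hh * (\<Sum>i=1..n+1. c i n * (y i - y (i-1)))"
        unfolding normh2_def y_def hh_def by (simp add: sum_distrib_left algebra_simps)
      also have "\<dots> \<le> hh * ((\<Sum>j=1..M-1. (FF n j)^2) / (2 * L))"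
        using E hhp by (intro mult_left_mono) auto
      also have "\<dots> = normh2 a b M (FF n) * ((b - a) powr \<beta> / cstar \<beta>)"
      proof -
        have "1 / (2 * L) = (b - a) powr \<beta> / cstar \<beta>"
          unfolding L_def using cs assms by (simp add: powr_minus field_simps)
        hence "hh * ((\<Sum>j=1..M-1. (FF n j)^2) / (2 * L)) = (hh * (\<Sum>j=1..M-1. (FF n j)^2)) * ((b - a) powr \<beta> / cstar \<beta>)"
          by (metis (no_types, lifting) times_divide_eq_right mult.right_neutral)
        moreover have "hh * (\<Sum>j=1..M-1. (FF n j)^2) = normh2 a b M (FF n)" unfolding normh2_def hh_def ..
        ultimately show ?thesis by simp
      qed
      finally show ?thesis .
    qed
    define K0 where "K0 = (b - a) powr \<beta> * Gamma (1 - \<alpha>) / (cstar \<beta> * ta powr \<alpha>)"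
    define m where "m = (\<lambda>k. ((real k + (1 - \<alpha> / 2)) * ((T - ta) / real N)) powr \<alpha>
                    * normh2 a b M (\<lambda>j. f (xg a b M j) (tg ta T N (real k + (1 - \<alpha> / 2)))))"
    define Q where "Q = K0 * Max (m ` {..<n1})"
    have K0p: "0 < K0" unfolding K0_def using cs assms Gamma1_pos[of \<alpha>] by simp
    have nh_nn: "0 \<le> normh2 a b M w" for w unfolding normh2_def using assms M0 by (simp add: sum_nonneg)
    have m_nn: "0 \<le> m k" for k unfolding m_def using nh_nn by simp
    have n1p: "1 \<le> n1" "n1 \<le> N" using n1 by auto
    have z: "0 \<in> {..<n1}" using n1p by simp
    have fin: "finite (m ` {..<n1})" "m ` {..<n1} \<noteq> {}" using z by auto
    have mle: "m k \<le> Max (m ` {..<n1})" if "k < n1" for k using fin that by (intro Max_ge) auto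
    have "m 0 \<le> Max (m ` {..<n1})" by (rule mle) (use n1p in simp)
    hence "0 \<le> Max (m ` {..<n1})" using m_nn[of 0] by linarith
    hence Q0: "0 \<le> Q" unfolding Q_def using K0p by simp
    have gQ: "normh2 a b M (FF n) * ((b - a) powr \<beta> / cstar \<beta>) \<le> c 1 n * Q" if "n < n1" for n
    proof -
      define x where "x = (real n + \<sigma>) * \<tau>"
      have "0 < real n + \<sigma>" using sig by simp
      hence xp: "0 < x" unfolding x_def \<tau>_def using tp by (rule mult_pos_pos)
      have cl: "(x / ta) powr (-\<alpha>) / Gamma (1 - \<alpha>) \<le> c 1 n"
        unfolding x_def \<tau>_def c_def by (rule c1_lower[OF assms(5) tp tle assms(1,2) \<sigma>_def])
      have mn: "m n = x powr \<alpha> * normh2 a b M (FF n)" unfolding m_def x_def \<tau>_def FF_def \<sigma>_def by simp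
      have "normh2 a b M (FF n) * ((b - a) powr \<beta> / cstar \<beta>)
          = ((x / ta) powr (-\<alpha>) / Gamma (1 - \<alpha>)) * (K0 * m n)"
      proof -
        have g1: "0 < Gamma (1 - \<alpha>)" using Gamma1_pos assms by blast
        have "(x / ta) powr (-\<alpha>) * x powr \<alpha> = ta powr \<alpha>" by (rule powr_cancel_aux[OF xp assms(5)])
        moreover have g1n: "Gamma (1 - \<alpha>) \<noteq> 0" using g1 by simp
        ultimately show ?thesis unfolding mn K0_def using g1n cs assms
          by (simp add: field_simps)
      qed
      also have "\<dots> \<le> c 1 n * (K0 * m n)"
        using cl K0p m_nn by (intro mult_right_mono) auto
      also have "\<dots> \<le> c 1 n * Q"
        unfolding Q_def using mle[OF that] K0p c1pos[of n] by (intro mult_left_mono) auto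
      finally show ?thesis .
    qed
    have G: "(\<lambda>i. normh2 a b M (U i)) n1 \<le> (\<lambda>i. normh2 a b M (U i)) 0 + Q"
    proof (rule gronwall[where c = c and g = "\<lambda>n. normh2 a b M (FF n) * ((b - a) powr \<beta> / cstar \<beta>)" and nmax = n1 and y = "\<lambda>i. normh2 a b M (U i)" and Q = Q])
      show "\<And>n. n < n1 \<Longrightarrow> (\<Sum>i=1..n+1. c i n * ((\<lambda>i. normh2 a b M (U i)) i - (\<lambda>i. normh2 a b M (U i)) (i-1)))
          \<le> normh2 a b M (FF n) * ((b - a) powr \<beta> / cstar \<beta>)"
        using stepE n1p by simp
    qed (use c1pos cmono gQ Q0 in auto)
    hence "normh2 a b M (U n1) \<le> normh2 a b M (U 0) + Q" by simp
    thus "normh2 a b M (U n1) \<le> normh2 a b M (U 0)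
         + (b - a) powr \<beta> * Gamma (1 - \<alpha>) / (cstar \<beta> * ta powr \<alpha>)
           * Max ((\<lambda>k. ((real k + (1 - \<alpha> / 2)) * ((T - ta) / real N)) powr \<alpha>
                    * normh2 a b M (\<lambda>j. f (xg a b M j) (tg ta T N (real k + (1 - \<alpha> / 2))))) ` {..<n1})"
      unfolding Q_def K0_def m_def .
  qed
qed

end
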